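(* Let $\alpha=2k+1\ge5$ be odd, $\varepsilon=e^{\pi i/(2\alpha)}$, $\zeta_j=\varepsilon^{2j-1}$ for $j=1,\dots,2\alpha$ (the roots of $z^{2\alpha}=-1$), and for $\mu>0$ let $A_\alpha(\mu)$ be the $2\alpha\times2\alpha$ matrix with $(r,j)$ entry $\zeta_j^{\,r-1}$ for $1\le r\le\alpha$ and $\zeta_j^{\,r-\alpha-1}e^{\mu\zeta_j}$ for $\alpha+1\le r\le 2\alpha$. Put $c_\ell=\cos\frac{\ell\pi}{2\alpha}$, $s_\ell=\sin\frac{\ell\pi}{2\alpha}$, $\sigma=2\sum_{j=1}^{k-2}c_{2j-1}$ (an empty sum being $0$), and $$\gamma_1=\sigma+2c_{2k-3}+2c_{2k-1},\quad \gamma_2=\sigma+2c_{2k-3}+c_{2k-1},\quad \gamma_3=\sigma+c_{2k-3}+2c_{2k-1}.$$ Then there are nonzero constants $K_1,K_2$ with $-K_2/K_1=2/\sin^2\frac{\pi}{2\alpha}$ such that, as $\mu\to+\infty$, $$\det A_\alpha(\mu)=K_1e^{\gamma_1\mu}\sin\mu+K_2e^{\gamma_2\mu}\sin(s_{2k-1}\mu)+O\big(e^{\gamma_3\mu}\big).$$ *)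

theory Defs
  imports "HOL-Analysis.Analysis" "HOL-Library.Landau_Symbols" "Jordan_Normal_Form.Determinant"
begin

definition eps_root :: "nat \<Rightarrow> complex" where
  "eps_root \<alpha> = exp (\<i> * of_real (pi / (2 * real \<alpha>)))"

definition zeta :: "nat \<Rightarrow> nat \<Rightarrow> complex" where
  "zeta \<alpha> j = eps_root \<alpha> ^ (2 * j - 1)"

(* A_alpha(mu), 2alpha x 2alpha; Isabelle indices are 0-based:
   entry (r,j) (0-based) is the paper's entry (r+1, j+1). *)
definition A_mat :: "nat \<Rightarrow> real \<Rightarrow> complex mat" where
  "A_mat \<alpha> \<mu> = mat (2 * \<alpha>) (2 * \<alpha>) (\<lambda>(r, j).
      if r < \<alpha> then zeta \<alpha> (j + 1) ^ r
      else zeta \<alpha> (j + 1) ^ (r - \<alpha>) * exp (of_real \<mu> * zeta \<alpha> (j + 1)))"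

definition cc :: "nat \<Rightarrow> nat \<Rightarrow> real" where
  "cc \<alpha> l = cos (real l * pi / (2 * real \<alpha>))"

definition ss :: "nat \<Rightarrow> nat \<Rightarrow> real" where
  "ss \<alpha> l = sin (real l * pi / (2 * real \<alpha>))"

definition sigma :: "nat \<Rightarrow> real" where
  "sigma k = 2 * (\<Sum>j = 1..k - 2. cc (2 * k + 1) (2 * j - 1))"

definition gamma1 :: "nat \<Rightarrow> real" where
  "gamma1 k = sigma k + 2 * cc (2*k+1) (2*k-3) + 2 * cc (2*k+1) (2*k-1)"
definition gamma2 :: "nat \<Rightarrow> real" where
  "gamma2 k = sigma k + 2 * cc (2*k+1) (2*k-3) + cc (2*k+1) (2*k-1)"
definition gamma3 :: "nat \<Rightarrow> real" where
  "gamma3 k = sigma k + cc (2*k+1) (2*k-3) + 2 * cc (2*k+1) (2*k-1)"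

end

theory Submission
  imports Defs
begin


definition zz :: "nat \<Rightarrow> nat \<Rightarrow> complex" where
  "zz \<alpha> j = zeta \<alpha> (j + 1)"

definition McW :: "nat \<Rightarrow> (nat \<Rightarrow> complex) \<Rightarrow> nat set \<Rightarrow> complex mat" where
  "McW \<alpha> w T = mat (2*\<alpha>) (2*\<alpha>) (\<lambda>(r,j). if r < \<alpha> then (if j \<in> T then 0 else w j ^ r)
      else (if j \<in> T then w j ^ (r - \<alpha>) else 0))"

definition Bm :: "nat \<Rightarrow> nat \<Rightarrow> nat \<Rightarrow> complex" where
  "Bm \<alpha> r j = (if r < \<alpha> then zz \<alpha> j ^ r else zz \<alpha> j ^ (r - \<alpha>))"

lemma McW_carrier: "McW \<alpha> w T \<in> carrier_mat (2*\<alpha>) (2*\<alpha>)"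
  unfolding McW_def by auto

lemma prod_McW:
  assumes p: "p permutes {0..<2*\<alpha>}" and T: "T \<subseteq> {0..<2*\<alpha>}" "card T = \<alpha>"
  shows "(\<Prod>i = 0..<2*\<alpha>. McW \<alpha> (zz \<alpha>) T $$ (i, p i)) =
     (if p ` {\<alpha>..<2*\<alpha>} = T then (\<Prod>i = 0..<2*\<alpha>. Bm \<alpha> i (p i)) else 0)"
proof -
  have pin: "p i < 2*\<alpha>" if "i < 2*\<alpha>" for i using p that by (meson atLeastLessThan_iff permutes_in_image zero_le)
  have inj: "inj p" using p permutes_inj by blast
  show ?thesis
  proof (cases "p ` {\<alpha>..<2*\<alpha>} = T")
    case True
    have "McW \<alpha> (zz \<alpha>) T $$ (i, p i) = Bm \<alpha> i (p i)" if "i < 2*\<alpha>" for i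
    proof (cases "i < \<alpha>")
      case True
      have "p i \<notin> T"
      proof
        assume "p i \<in> T"
        then obtain i' where "i' \<in> {\<alpha>..<2*\<alpha>}" "p i = p i'" using \<open>p ` {\<alpha>..<2*\<alpha>} = T\<close> by auto
        then show False using inj True by (metis atLeastLessThan_iff injD leD)
      qed
      then show ?thesis using True that pin[OF that] unfolding McW_def Bm_def by auto
    next
      case False
      then have "p i \<in> T" using \<open>p ` {\<alpha>..<2*\<alpha>} = T\<close> that by auto
      then show ?thesis using False that pin[OF that] unfolding McW_def Bm_def by auto
    qed
    then show ?thesis using True by (auto intro: prod.cong)
  next
    case False
    have c: "card (p ` {\<alpha>..<2*\<alpha>}) = \<alpha>" using inj by (simp add: card_image inj_on_subset)
    have "\<not> p ` {\<alpha>..<2*\<alpha>} \<subseteq> T"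
    proof
      assume "p ` {\<alpha>..<2*\<alpha>} \<subseteq> T"
      then have "p ` {\<alpha>..<2*\<alpha>} = T" using c T
        by (metis card_subset_eq finite_atLeastLessThan finite_subset)
      then show False using False by simp
    qed
    then obtain i where i: "i \<in> {\<alpha>..<2*\<alpha>}" "p i \<notin> T" by blast
    then have "McW \<alpha> (zz \<alpha>) T $$ (i, p i) = 0" using pin[of i] unfolding McW_def by auto
    then have "(\<Prod>i = 0..<2*\<alpha>. McW \<alpha> (zz \<alpha>) T $$ (i, p i)) = 0"
      using i by (intro prod_zero) auto
    then show ?thesis using False by simp
  qed
qed

lemma det_expansion:
  "det (A_mat \<alpha> \<mu>) = (\<Sum>T\<in>{T. T \<subseteq> {0..<2*\<alpha>} \<and> card T = \<alpha>}.
      det (McW \<alpha> (zz \<alpha>) T) * exp (of_real \<mu> * (\<Sum>j\<in>T. zz \<alpha> j)))"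
proof -
  let ?P = "{p. p permutes {0..<2*\<alpha>}}"
  let ?U = "{\<alpha>..<2*\<alpha>}"
  let ?TS = "{T. T \<subseteq> {0..<2*\<alpha>} \<and> card T = \<alpha>}"
  let ?f = "\<lambda>p. signof p * (\<Prod>i = 0..<2*\<alpha>. Bm \<alpha> i (p i)) * exp (of_real \<mu> * (\<Sum>j\<in>p ` ?U. zz \<alpha> j))"
  have A: "A_mat \<alpha> \<mu> \<in> carrier_mat (2*\<alpha>) (2*\<alpha>)" unfolding A_mat_def by auto
  have fP: "finite ?P" by (simp add: finite_permutations)
  have fTS: "finite ?TS" by (rule finite_subset[of _ "Pow {0..<2*\<alpha>}"]) auto
  have step1: "signof p * (\<Prod>i = 0..<2*\<alpha>. A_mat \<alpha> \<mu> $$ (i, p i)) = ?f p" if p: "p permutes {0..<2*\<alpha>}" for p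
  proof -
    have pin: "p i < 2*\<alpha>" if "i < 2*\<alpha>" for i using p that by (meson atLeastLessThan_iff permutes_in_image zero_le)
    have inj: "inj p" using p permutes_inj by blast
    have "(\<Prod>i = 0..<2*\<alpha>. A_mat \<alpha> \<mu> $$ (i, p i)) =
        (\<Prod>i = 0..<2*\<alpha>. Bm \<alpha> i (p i) * (if i < \<alpha> then 1 else exp (of_real \<mu> * zz \<alpha> (p i))))"
      by (rule prod.cong) (auto simp: A_mat_def Bm_def zz_def pin)
    also have "\<dots> = (\<Prod>i = 0..<2*\<alpha>. Bm \<alpha> i (p i)) * (\<Prod>i = 0..<2*\<alpha>. (if i < \<alpha> then 1 else exp (of_real \<mu> * zz \<alpha> (p i))))"
      by (rule prod.distrib)
    also have "(\<Prod>i = 0..<2*\<alpha>. (if i < \<alpha> then 1 else exp (of_real \<mu> * zz \<alpha> (p i)))) = (\<Prod>i\<in>?U. exp (of_real \<mu> * zz \<alpha> (p i)))"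
    proof -
      have "{0..<2*\<alpha>} = {0..<\<alpha>} \<union> ?U" by auto
      then show ?thesis by (simp add: prod.union_disjoint)
    qed
    also have "\<dots> = exp (\<Sum>i\<in>?U. of_real \<mu> * zz \<alpha> (p i))" by (simp add: exp_sum)
    also have "(\<Sum>i\<in>?U. of_real \<mu> * zz \<alpha> (p i)) = of_real \<mu> * (\<Sum>j\<in>p ` ?U. zz \<alpha> j)"
      by (simp add: sum_distrib_left sum.reindex inj_on_subset[OF inj])
    finally show ?thesis by (simp add: mult.assoc)
  qed
  have "det (A_mat \<alpha> \<mu>) = (\<Sum>p\<in>?P. ?f p)"
    unfolding det_def'[OF A] by (rule sum.cong) (auto simp: step1)
  also have "\<dots> = (\<Sum>T\<in>?TS. \<Sum>p\<in>{p \<in> ?P. p ` ?U = T}. ?f p)"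
  proof (rule sum.group[symmetric, OF fP fTS])
    show "(\<lambda>p. p ` ?U) ` ?P \<subseteq> ?TS"
    proof safe
      fix p assume p: "p permutes {0..<2*\<alpha>}"
      show "card (p ` ?U) = \<alpha>" using permutes_inj[OF p] by (simp add: card_image inj_on_subset)
      fix x assume "x \<in> ?U" then show "p x \<in> {0..<2*\<alpha>}" using p by (simp add: permutes_in_image)
    qed
  qed
  also have "\<dots> = (\<Sum>T\<in>?TS. det (McW \<alpha> (zz \<alpha>) T) * exp (of_real \<mu> * (\<Sum>j\<in>T. zz \<alpha> j)))"
  proof (rule sum.cong[OF refl])
    fix T assume T: "T \<in> ?TS"
    have "det (McW \<alpha> (zz \<alpha>) T) = (\<Sum>p\<in>?P. signof p * (if p ` ?U = T then (\<Prod>i = 0..<2*\<alpha>. Bm \<alpha> i (p i)) else 0))"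
      unfolding det_def'[OF McW_carrier] using T by (intro sum.cong) (auto simp: prod_McW)
    also have "\<dots> = (\<Sum>p\<in>{p \<in> ?P. p ` ?U = T}. signof p * (\<Prod>i = 0..<2*\<alpha>. Bm \<alpha> i (p i)))"
      by (subst sum.inter_filter[OF fP]) (rule sum.cong, auto)
    finally have d: "det (McW \<alpha> (zz \<alpha>) T) = \<dots>" .
    show "(\<Sum>p\<in>{p \<in> ?P. p ` ?U = T}. ?f p) = det (McW \<alpha> (zz \<alpha>) T) * exp (of_real \<mu> * (\<Sum>j\<in>T. zz \<alpha> j))"
      unfolding d sum_distrib_right by (rule sum.cong) auto
  qed
  finally show ?thesis .
qed


lemma poly_vanish_prod:
  fixes p :: "complex poly"
  assumes "finite U" "inj_on w U" "degree p \<le> card U" "\<forall>u\<in>U. poly p (w u) = 0"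
  shows "poly p x * (\<Prod>u\<in>U. x0 - w u) = poly p x0 * (\<Prod>u\<in>U. x - w u)"
  using assms
proof (induction U arbitrary: p rule: finite_induct)
  case empty
  then have "degree p = 0" by simp
  then obtain c where "p = [:c:]" by (meson degree_eq_zeroE)
  then show ?case by simp
next
  case (insert u U)
  have "poly p (w u) = 0" using insert by auto
  then have "[:- w u, 1:] dvd p" by (simp add: dvd_iff_poly_eq_0)
  then obtain q where q: "p = [:- w u, 1:] * q" by (elim dvdE)
  show ?case
  proof (cases "q = 0")
    case True
    then show ?thesis using q by simp
  next
    case False
    have "degree p = degree q + 1" unfolding q by (subst degree_mult_eq) (use False in auto)
    then have dq: "degree q \<le> card U"
      using insert(1,2,5) by simp
    have "\<forall>v\<in>U. poly q (w v) = 0"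
    proof
      fix v assume v: "v \<in> U"
      then have "w v \<noteq> w u" using insert(2,4) unfolding inj_on_def by blast
      moreover have "poly p (w v) = 0" using insert(6) v by auto
      ultimately show "poly q (w v) = 0" using q by simp
    qed
    then have IH: "poly q x * (\<Prod>u\<in>U. x0 - w u) = poly q x0 * (\<Prod>u\<in>U. x - w u)"
      using insert(3)[of q] insert(4) dq by auto
    have px: "poly p y = (y - w u) * poly q y" for y unfolding q by (simp add: algebra_simps)
    have "poly p x * (\<Prod>u\<in>insert u U. x0 - w u) = (x - w u) * (x0 - w u) * (poly q x * (\<Prod>u\<in>U. x0 - w u))"
      unfolding px prod.insert[OF insert(1,2)] by (simp add: mult_ac)
    also have "\<dots> = (x - w u) * (x0 - w u) * (poly q x0 * (\<Prod>u\<in>U. x - w u))" unfolding IH ..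
    also have "\<dots> = poly p x0 * (\<Prod>u\<in>insert u U. x - w u)"
      unfolding px prod.insert[OF insert(1,2)] by (simp add: mult_ac)
    finally show ?thesis .
  qed
qed

lemma fun_vanish_prod:
  fixes f :: "complex \<Rightarrow> complex"
  assumes f: "\<And>x. f x = (\<Sum>i<m. c i * x ^ i)"
    and "finite U" "inj_on w U" "m \<le> card U + 1" "\<forall>u\<in>U. f (w u) = 0"
  shows "f x * (\<Prod>u\<in>U. x0 - w u) = f x0 * (\<Prod>u\<in>U. x - w u)"
proof -
  define p where "p = (\<Sum>i<m. monom (c i) i)"
  have pp: "poly p x = f x" for x unfolding p_def f by (simp add: poly_sum poly_monom)
  have "degree p \<le> m - 1" unfolding p_def
    by (rule degree_sum_le) (auto intro: order.trans[OF degree_monom_le])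
  then have "degree p \<le> card U" using assms(4) by simp
  then show ?thesis using poly_vanish_prod[of U w p x x0] assms pp by simp
qed

lemma sum_split_lt:
  fixes \<alpha> :: nat
  shows
  "(\<Sum>i<2*\<alpha>. (if i < \<alpha> then f i else g i)) = (\<Sum>i<\<alpha>. f i) + (\<Sum>i\<in>{\<alpha>..<2*\<alpha>}. g i)"
proof -
  have "{..<2*\<alpha>} = {..<\<alpha>} \<union> {\<alpha>..<2*\<alpha>}" by auto
  then have "(\<Sum>i<2*\<alpha>. (if i < \<alpha> then f i else g i)) =
     (\<Sum>i<\<alpha>. (if i < \<alpha> then f i else g i)) + (\<Sum>i\<in>{\<alpha>..<2*\<alpha>}. (if i < \<alpha> then f i else g i))"
    by (simp add: sum.union_disjoint ivl_disj_int)
  then show ?thesis by simp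
qed

lemma mat_delete_eq_col:
  assumes "A \<in> carrier_mat n n" "B \<in> carrier_mat n n"
    and "\<And>i j. i < n \<Longrightarrow> j < n \<Longrightarrow> j \<noteq> a \<Longrightarrow> A $$ (i,j) = B $$ (i,j)"
  shows "mat_delete A i a = mat_delete B i a"
  using assms unfolding mat_delete_def
  by (intro eq_matI) auto

lemma det_col_poly_top:
  assumes a: "a < 2*\<alpha>" "a \<notin> T"
  shows "det (McW \<alpha> (w(a:=x)) T) = (\<Sum>i<\<alpha>. cofactor (McW \<alpha> w T) i a * x ^ i)"
proof -
  have "det (McW \<alpha> (w(a:=x)) T) = (\<Sum>i<2*\<alpha>. McW \<alpha> (w(a:=x)) T $$ (i,a) * cofactor (McW \<alpha> (w(a:=x)) T) i a)"
    by (rule laplace_expansion_column[OF McW_carrier a(1)])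
  also have "\<dots> = (\<Sum>i<2*\<alpha>. (if i < \<alpha> then cofactor (McW \<alpha> w T) i a * x ^ i else 0))"
  proof (rule sum.cong[OF refl])
    fix i assume i: "i \<in> {..<2*\<alpha>}"
    have "mat_delete (McW \<alpha> (w(a:=x)) T) i a = mat_delete (McW \<alpha> w T) i a"
      by (rule mat_delete_eq_col[OF McW_carrier McW_carrier]) (auto simp: McW_def)
    then have "cofactor (McW \<alpha> (w(a:=x)) T) i a = cofactor (McW \<alpha> w T) i a"
      unfolding cofactor_def by simp
    then show "McW \<alpha> (w(a:=x)) T $$ (i,a) * cofactor (McW \<alpha> (w(a:=x)) T) i a =
      (if i < \<alpha> then cofactor (McW \<alpha> w T) i a * x ^ i else 0)"
      using i a by (auto simp: McW_def)
  qed
  also have "\<dots> = (\<Sum>i<\<alpha>. cofactor (McW \<alpha> w T) i a * x ^ i)"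
    using sum_split_lt[of \<alpha> "\<lambda>i. cofactor (McW \<alpha> w T) i a * x ^ i" "\<lambda>_. 0"] by simp
  finally show ?thesis .
qed

lemma det_col_poly_bot:
  assumes b: "b < 2*\<alpha>" "b \<in> T"
  shows "det (McW \<alpha> (w(b:=y)) T) = (\<Sum>i<\<alpha>. cofactor (McW \<alpha> w T) (\<alpha> + i) b * y ^ i)"
proof -
  have "det (McW \<alpha> (w(b:=y)) T) = (\<Sum>i<2*\<alpha>. McW \<alpha> (w(b:=y)) T $$ (i,b) * cofactor (McW \<alpha> (w(b:=y)) T) i b)"
    by (rule laplace_expansion_column[OF McW_carrier b(1)])
  also have "\<dots> = (\<Sum>i<2*\<alpha>. (if i < \<alpha> then 0 else cofactor (McW \<alpha> w T) i b * y ^ (i - \<alpha>)))"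
  proof (rule sum.cong[OF refl])
    fix i assume i: "i \<in> {..<2*\<alpha>}"
    have "mat_delete (McW \<alpha> (w(b:=y)) T) i b = mat_delete (McW \<alpha> w T) i b"
      by (rule mat_delete_eq_col[OF McW_carrier McW_carrier]) (auto simp: McW_def)
    then have "cofactor (McW \<alpha> (w(b:=y)) T) i b = cofactor (McW \<alpha> w T) i b"
      unfolding cofactor_def by simp
    then show "McW \<alpha> (w(b:=y)) T $$ (i,b) * cofactor (McW \<alpha> (w(b:=y)) T) i b =
      (if i < \<alpha> then 0 else cofactor (McW \<alpha> w T) i b * y ^ (i - \<alpha>))"
      using i b by (auto simp: McW_def)
  qed
  also have "\<dots> = (\<Sum>i\<in>{\<alpha>..<2*\<alpha>}. cofactor (McW \<alpha> w T) i b * y ^ (i - \<alpha>))"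
    using sum_split_lt[of \<alpha> "\<lambda>_. 0" "\<lambda>i. cofactor (McW \<alpha> w T) i b * y ^ (i - \<alpha>)"] by simp
  also have "\<dots> = (\<Sum>i<\<alpha>. cofactor (McW \<alpha> w T) (\<alpha> + i) b * y ^ i)"
  proof -
    let ?g = "\<lambda>i. cofactor (McW \<alpha> w T) i b * y ^ (i - \<alpha>)"
    have "sum ?g {\<alpha>..<2*\<alpha>} = sum ?g {0+\<alpha>..<\<alpha>+\<alpha>}" by (simp add: mult_2)
    also have "\<dots> = (\<Sum>i\<in>{0..<\<alpha>}. ?g (i + \<alpha>))" by (rule sum.shift_bounds_nat_ivl)
    finally show ?thesis by (simp add: lessThan_atLeast0 add.commute)
  qed
  finally show ?thesis .
qed

lemma det_McW_ident_cols:
  assumes "a < 2*\<alpha>" "u < 2*\<alpha>" "a \<noteq> u" "(a \<in> T) = (u \<in> T)" "w a = w u"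
  shows "det (McW \<alpha> w T) = 0"
proof (rule det_identical_columns[OF McW_carrier assms(3,1,2)])
  show "col (McW \<alpha> w T) a = col (McW \<alpha> w T) u"
    using assms by (intro eq_vecI) (auto simp: McW_def)
qed


lemma ratio_lemma:
  assumes inj: "inj_on w {0..<2*\<alpha>}" and T: "T \<subseteq> {0..<2*\<alpha>}" "card T = \<alpha>"
    and a: "a < 2*\<alpha>" "a \<notin> T" and b: "b \<in> T"
  shows "- det (McW \<alpha> w (insert a (T - {b}))) * (\<Prod>u\<in>{0..<2*\<alpha>} - T - {a}. w a - w u) * (\<Prod>r\<in>T - {b}. w b - w r)
       = det (McW \<alpha> w T) * (\<Prod>r\<in>T - {b}. w a - w r) * (\<Prod>u\<in>{0..<2*\<alpha>} - T - {a}. w b - w u)"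
proof -
  define R where "R = T - {b}"
  define U where "U = {0..<2*\<alpha>} - T - {a}"
  define H where "H x y = det (McW \<alpha> (w(a:=x, b:=y)) T)" for x y
  have b2: "b < 2*\<alpha>" using T b by auto
  have ab: "a \<noteq> b" using a b by auto
  have fT: "finite T" using T finite_subset by blast
  have cU: "card U = \<alpha> - 1"
  proof -
    have "card ({0..<2*\<alpha>} - T) = \<alpha>" using T fT by (simp add: card_Diff_subset)
    then show ?thesis unfolding U_def using a by (simp add: card_Diff_singleton)
  qed
  have cR: "card R = \<alpha> - 1" unfolding R_def using b T fT by (simp add: card_Diff_singleton)
  have apos: "\<alpha> \<ge> 1" using b T fT by (metis One_nat_def Suc_leI card_gt_0_iff empty_iff)
  have injU: "inj_on w U" by (rule inj_on_subset[OF inj]) (auto simp: U_def)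
  have injR: "inj_on w R" by (rule inj_on_subset[OF inj]) (use T in \<open>auto simp: R_def\<close>)
  have xform: "H x y * (\<Prod>u\<in>U. x0 - w u) = H x0 y * (\<Prod>u\<in>U. x - w u)" for x y x0
  proof (rule fun_vanish_prod[where m=\<alpha> and c="\<lambda>i. cofactor (McW \<alpha> (w(b:=y)) T) i a"])
    fix x
    have "w(a:=x, b:=y) = (w(b:=y))(a:=x)" using ab by (simp add: fun_upd_twist)
    then show "H x y = (\<Sum>i<\<alpha>. cofactor (McW \<alpha> (w(b:=y)) T) i a * x ^ i)"
      unfolding H_def using det_col_poly_top[OF a] by simp
  next
    show "finite U" unfolding U_def by simp
    show "inj_on w U" by (rule injU)
    show "\<alpha> \<le> card U + 1" using cU by simp
    show "\<forall>u\<in>U. H (w u) y = 0"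
    proof
      fix u assume u: "u \<in> U"
      then have "u < 2*\<alpha>" "u \<noteq> a" "u \<notin> T" "u \<noteq> b" using b unfolding U_def by auto
      then show "H (w u) y = 0" unfolding H_def
        using a ab by (intro det_McW_ident_cols[of a \<alpha> u]) auto
    qed
  qed
  have yform: "H x y * (\<Prod>r\<in>R. y0 - w r) = H x y0 * (\<Prod>r\<in>R. y - w r)" for x y y0
  proof (rule fun_vanish_prod[where m=\<alpha> and c="\<lambda>i. cofactor (McW \<alpha> (w(a:=x)) T) (\<alpha> + i) b"])
    fix y
    show "H x y = (\<Sum>i<\<alpha>. cofactor (McW \<alpha> (w(a:=x)) T) (\<alpha> + i) b * y ^ i)"
      unfolding H_def using det_col_poly_bot[OF b2 b] by simp
  next
    show "finite R" unfolding R_def using fT by simp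
    show "inj_on w R" by (rule injR)
    show "\<alpha> \<le> card R + 1" using cR by simp
    show "\<forall>r\<in>R. H x (w r) = 0"
    proof
      fix r assume r: "r \<in> R"
      then have "r < 2*\<alpha>" "r \<noteq> a" "r \<in> T" "r \<noteq> b" using T a unfolding R_def by auto
      then show "H x (w r) = 0" unfolding H_def
        using b b2 ab by (intro det_McW_ident_cols[of b \<alpha> r]) auto
    qed
  qed
  have D: "det (McW \<alpha> w T) = H (w a) (w b)" unfolding H_def by simp
  have sw: "McW \<alpha> w (insert a (T - {b})) = swapcols a b (McW \<alpha> (w(a:=w b, b:=w a)) T)"
    using a b b2 ab by (intro eq_matI) (auto simp: McW_def)
  have D': "det (McW \<alpha> w (insert a (T - {b}))) = - H (w b) (w a)"
    unfolding sw H_def by (rule det_swapcols[OF a(1) b2 ab McW_carrier])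
  have e1: "H (w b) (w a) * (\<Prod>u\<in>U. w a - w u) = H (w a) (w a) * (\<Prod>u\<in>U. w b - w u)"
    by (rule xform)
  have e2: "H (w a) (w a) * (\<Prod>r\<in>R. w b - w r) = H (w a) (w b) * (\<Prod>r\<in>R. w a - w r)"
    by (rule yform)
  have "H (w b) (w a) * (\<Prod>u\<in>U. w a - w u) * (\<Prod>r\<in>R. w b - w r) =
        H (w a) (w b) * (\<Prod>r\<in>R. w a - w r) * (\<Prod>u\<in>U. w b - w u)"
  proof -
    have "H (w b) (w a) * (\<Prod>u\<in>U. w a - w u) * (\<Prod>r\<in>R. w b - w r) =
        (H (w a) (w a) * (\<Prod>r\<in>R. w b - w r)) * (\<Prod>u\<in>U. w b - w u)"
      unfolding e1 by (simp only: mult_ac)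
    also have "\<dots> = H (w a) (w b) * (\<Prod>r\<in>R. w a - w r) * (\<Prod>u\<in>U. w b - w u)"
      unfolding e2 ..
    finally show ?thesis .
  qed
  then have "- det (McW \<alpha> w (insert a R)) * (\<Prod>u\<in>U. w a - w u) * (\<Prod>r\<in>R. w b - w r)
       = det (McW \<alpha> w T) * (\<Prod>r\<in>R. w a - w r) * (\<Prod>u\<in>U. w b - w u)"
    using D D'[folded R_def] by simp
  then show ?thesis unfolding R_def U_def .
qed


lemma poly_as_sum_lt:
  fixes p :: "complex poly"
  assumes "degree p < m"
  shows "poly p x = (\<Sum>i<m. coeff p i * x ^ i)"
proof -
  have "poly p x = (\<Sum>i\<le>degree p. coeff p i * x ^ i)" by (rule poly_altdef)
  also have "\<dots> = (\<Sum>i<m. coeff p i * x ^ i)"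
    by (rule sum.mono_neutral_left) (use assms in \<open>auto simp: coeff_eq_0\<close>)
  finally show ?thesis .
qed

lemma vander_kernel:
  fixes w :: "nat \<Rightarrow> complex"
  assumes X: "finite X" "inj_on w X" "card X \<le> m"
    and s: "\<And>i. i < m \<Longrightarrow> (\<Sum>j\<in>X. w j ^ i * v j) = 0"
    and j0: "j0 \<in> X"
  shows "v j0 = 0"
proof -
  define L where "L = (\<Prod>j\<in>X - {j0}. [:- w j, 1:])"
  have dL: "degree L = card (X - {j0})" unfolding L_def
    by (subst degree_prod_eq_sum_degree) auto
  then have dL': "degree L < m" using X j0 by (metis card_Diff1_less le_trans not_le)
  have pL: "poly L x = (\<Prod>j\<in>X - {j0}. x - w j)" for x unfolding L_def by (simp add: poly_prod)
  have "(\<Sum>j\<in>X. v j * poly L (w j)) = (\<Sum>j\<in>X. v j * (\<Sum>i<m. coeff L i * w j ^ i))"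
    using poly_as_sum_lt[OF dL'] by simp
  also have "\<dots> = (\<Sum>i<m. coeff L i * (\<Sum>j\<in>X. w j ^ i * v j))"
    by (simp add: sum_distrib_left sum_distrib_right mult_ac sum.swap[of _ X])
  also have "\<dots> = 0" using s by simp
  finally have z: "(\<Sum>j\<in>X. v j * poly L (w j)) = 0" .
  have "(\<Sum>j\<in>X. v j * poly L (w j)) = v j0 * poly L (w j0)"
  proof (rule sum.remove[OF X(1) j0, THEN trans])
    have "poly L (w j) = 0" if "j \<in> X - {j0}" for j unfolding pL
      using that X(1) by (intro prod_zero) auto
    then show "v j0 * poly L (w j0) + (\<Sum>j\<in>X - {j0}. v j * poly L (w j)) = v j0 * poly L (w j0)"
      by simp
  qed
  moreover have "poly L (w j0) \<noteq> 0" unfolding pL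
  proof
    assume "(\<Prod>j\<in>X - {j0}. w j0 - w j) = 0"
    then obtain j where "j \<in> X - {j0}" "w j0 = w j" using X(1) by auto
    then show False using X(2) j0 unfolding inj_on_def by blast
  qed
  ultimately show ?thesis using z by simp
qed

lemma McW_nonzero:
  assumes inj: "inj_on w {0..<2*\<alpha>}" and T: "T \<subseteq> {0..<2*\<alpha>}" "card T = \<alpha>"
  shows "det (McW \<alpha> w T) \<noteq> 0"
proof
  assume "det (McW \<alpha> w T) = 0"
  then obtain v where v: "v \<in> carrier_vec (2*\<alpha>)" "v \<noteq> 0\<^sub>v (2*\<alpha>)" "McW \<alpha> w T *\<^sub>v v = 0\<^sub>v (2*\<alpha>)"
    using det_0_iff_vec_prod_zero[OF McW_carrier] by blast
  have fT: "finite T" using T finite_subset by blast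
  have row: "(\<Sum>j<2*\<alpha>. McW \<alpha> w T $$ (i, j) * v $ j) = 0" if "i < 2*\<alpha>" for i
  proof -
    have "(McW \<alpha> w T *\<^sub>v v) $ i = 0" using v(3) that by simp
    then show ?thesis using v(1) that unfolding McW_def
      by (simp add: scalar_prod_def lessThan_atLeast0)
  qed
  have top: "(\<Sum>j\<in>{0..<2*\<alpha>} - T. w j ^ i * v $ j) = 0" if "i < \<alpha>" for i
  proof -
    have "(\<Sum>j<2*\<alpha>. McW \<alpha> w T $$ (i, j) * v $ j) = (\<Sum>j<2*\<alpha>. if j \<in> T then 0 else w j ^ i * v $ j)"
      using that by (intro sum.cong) (auto simp: McW_def)
    also have "\<dots> = (\<Sum>j\<in>{0..<2*\<alpha>} - T. w j ^ i * v $ j)"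
      by (subst sum.mono_neutral_right[of "{..<2*\<alpha>}" "{0..<2*\<alpha>} - T"]) auto
    finally show ?thesis using row[of i] that by simp
  qed
  have bot: "(\<Sum>j\<in>T. w j ^ i * v $ j) = 0" if "i < \<alpha>" for i
  proof -
    have "(\<Sum>j<2*\<alpha>. McW \<alpha> w T $$ (\<alpha> + i, j) * v $ j) = (\<Sum>j<2*\<alpha>. if j \<in> T then w j ^ i * v $ j else 0)"
      using that by (intro sum.cong) (auto simp: McW_def)
    also have "\<dots> = (\<Sum>j\<in>T. w j ^ i * v $ j)"
      using T by (subst sum.mono_neutral_right[of "{..<2*\<alpha>}" "T"]) auto
    finally show ?thesis using row[of "\<alpha> + i"] that by simp
  qed
  have "v $ j = 0" if j: "j < 2*\<alpha>" for j
  proof (cases "j \<in> T")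
    case True
    show ?thesis
      by (rule vander_kernel[OF fT inj_on_subset[OF inj T(1)] _ bot True]) (use T in auto)
  next
    case False
    have c: "card ({0..<2*\<alpha>} - T) = \<alpha>" using T fT by (simp add: card_Diff_subset)
    show ?thesis
      by (rule vander_kernel[of "{0..<2*\<alpha>} - T" w \<alpha>, OF _ _ _ top]) (use c False j inj in \<open>auto intro: inj_on_subset\<close>)
  qed
  then have "v = 0\<^sub>v (2*\<alpha>)" using v(1) by (intro eq_vecI) auto
  then show False using v(2) by simp
qed


definition zi :: "nat \<Rightarrow> int \<Rightarrow> complex" where
  "zi \<alpha> j = exp (\<i> * of_real (pi * (2 * real_of_int j + 1) / (2 * real \<alpha>)))"

definition ee :: "nat \<Rightarrow> int \<Rightarrow> complex" where
  "ee \<alpha> m = exp (\<i> * of_real (pi * real_of_int m / (2 * real \<alpha>)))"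

definition sn :: "nat \<Rightarrow> int \<Rightarrow> real" where
  "sn \<alpha> d = sin (pi * real_of_int d / (2 * real \<alpha>))"

lemma zz_zi: "zz \<alpha> j = zi \<alpha> (int j)"
proof -
  have "zz \<alpha> j = eps_root \<alpha> ^ (2 * j + 1)" unfolding zz_def zeta_def by simp
  also have "\<dots> = exp (of_nat (2 * j + 1) * (\<i> * of_real (pi / (2 * real \<alpha>))))"
    unfolding eps_root_def by (rule exp_of_nat_mult[symmetric])
  also have "\<dots> = zi \<alpha> (int j)" unfolding zi_def
    by (rule arg_cong[where f=exp]) (simp add: field_simps)
  finally show ?thesis .
qed

lemma exp_diff_sin:
  fixes A B :: real
  shows "exp (\<i> * of_real A) - exp (\<i> * of_real B) =
    2 * \<i> * exp (\<i> * of_real ((A + B) / 2)) * of_real (sin ((A - B) / 2))"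
proof -
  have s: "of_real (sin ((A - B) / 2)) = (exp (\<i> * of_real ((A - B)/2)) - exp (- (\<i> * of_real ((A - B)/2)))) / (2 * \<i>)"
    by (simp add: sin_of_real[symmetric] sin_exp_eq field_simps)
  have "2 * \<i> * exp (\<i> * of_real ((A + B) / 2)) * of_real (sin ((A - B) / 2)) =
     exp (\<i> * of_real ((A + B) / 2)) * (exp (\<i> * of_real ((A - B)/2)) - exp (- (\<i> * of_real ((A - B)/2))))"
    unfolding s by (simp add: field_simps)
  also have "\<dots> = exp (\<i> * of_real ((A + B) / 2) + \<i> * of_real ((A - B)/2)) - exp (\<i> * of_real ((A + B) / 2) + - (\<i> * of_real ((A - B)/2)))"
    by (simp add: right_diff_distrib exp_add[symmetric])
  also have "\<i> * of_real ((A + B) / 2) + \<i> * of_real ((A - B)/2) = \<i> * of_real A"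
    by (simp add: algebra_simps flip: of_real_add) (simp add: field_simps)
  also have "\<i> * of_real ((A + B) / 2) + - (\<i> * of_real ((A - B)/2)) = \<i> * of_real B"
    by (simp add: algebra_simps flip: of_real_diff) (simp add: field_simps)
  finally show ?thesis by simp
qed

lemma zi_diff:
  assumes "\<alpha> > 0"
  shows "zi \<alpha> p - zi \<alpha> j = 2 * \<i> * ee \<alpha> (p + j + 1) * of_real (sn \<alpha> (p - j))"
proof -
  have "zi \<alpha> p - zi \<alpha> j = 2 * \<i> * exp (\<i> * of_real (((pi * (2 * real_of_int p + 1) / (2 * real \<alpha>)) + (pi * (2 * real_of_int j + 1) / (2 * real \<alpha>))) / 2))
     * of_real (sin (((pi * (2 * real_of_int p + 1) / (2 * real \<alpha>)) - (pi * (2 * real_of_int j + 1) / (2 * real \<alpha>))) / 2))"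
    unfolding zi_def by (rule exp_diff_sin)
  also have "((pi * (2 * real_of_int p + 1) / (2 * real \<alpha>)) + (pi * (2 * real_of_int j + 1) / (2 * real \<alpha>))) / 2
      = pi * real_of_int (p + j + 1) / (2 * real \<alpha>)" using assms by (simp add: field_simps)
  also have "((pi * (2 * real_of_int p + 1) / (2 * real \<alpha>)) - (pi * (2 * real_of_int j + 1) / (2 * real \<alpha>))) / 2
      = pi * real_of_int (p - j) / (2 * real \<alpha>)" using assms by (simp add: field_simps)
  finally show ?thesis unfolding ee_def sn_def .
qed

lemma ee_add: "ee \<alpha> m * ee \<alpha> n = ee \<alpha> (m + n)"
proof -
  have "\<i> * of_real (pi * real_of_int m / (2 * real \<alpha>)) + \<i> * of_real (pi * real_of_int n / (2 * real \<alpha>))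
     = \<i> * of_real (pi * real_of_int (m + n) / (2 * real \<alpha>))"
    by (simp only: distrib_left[symmetric] of_real_add[symmetric]) (simp add: add_divide_distrib distrib_left)
  then show ?thesis unfolding ee_def by (simp add: exp_add[symmetric])
qed

lemma ee_nonzero: "ee \<alpha> m \<noteq> 0" unfolding ee_def by simp

lemma tel_alg:
  fixes X Y sh sn s0 en e1 eS e2 :: complex
  assumes h1: "X * sh = en * s0 * Y" and h2: "en * e1 = eS * e2"
  shows "(2 * \<i> * e1 * sh) * X * sn = eS * s0 * ((2 * \<i> * e2 * sn) * Y)"
proof -
  have "(2 * \<i> * e1 * sh) * X * sn = 2 * \<i> * sn * e1 * (X * sh)" by (simp add: mult_ac)
  also have "\<dots> = 2 * \<i> * sn * s0 * Y * (en * e1)" unfolding h1 by (simp add: mult_ac)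
  also have "\<dots> = eS * s0 * ((2 * \<i> * e2 * sn) * Y)" unfolding h2 by (simp add: mult_ac)
  finally show ?thesis .
qed

lemma tel:
  assumes "\<alpha> > 0"
  shows "(\<Prod>j\<in>{lo..lo + int n - 1}. zi \<alpha> (p + 1) - zi \<alpha> j) * of_real (sn \<alpha> (p - (lo + int n - 1)))
     = ee \<alpha> (int n) * of_real (sn \<alpha> (p + 1 - lo)) * (\<Prod>j\<in>{lo..lo + int n - 1}. zi \<alpha> p - zi \<alpha> j)"
proof (induction n)
  case 0
  show ?case by (simp add: ee_def) (rule arg_cong[where f="sn \<alpha>"], simp)
next
  case (Suc n)
  let ?h = "lo + int n - 1"
  have I: "{lo..lo + int n} = insert (lo + int n) {lo..?h}" by auto
  have nI: "lo + int n \<notin> {lo..?h}" by auto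
  have e1: "lo + int (Suc n) - 1 = lo + int n" by simp
  have e2: "p + 1 - (lo + int n) = p - ?h" by simp
  have f1: "zi \<alpha> (p+1) - zi \<alpha> (lo + int n) = 2 * \<i> * ee \<alpha> (p + 1 + (lo + int n) + 1) * of_real (sn \<alpha> (p - ?h))"
    unfolding e2[symmetric] by (rule zi_diff[OF assms])
  have f2: "zi \<alpha> p - zi \<alpha> (lo + int n) = 2 * \<i> * ee \<alpha> (p + (lo + int n) + 1) * of_real (sn \<alpha> (p - (lo + int n)))"
    by (rule zi_diff[OF assms])
  have ee: "ee \<alpha> (int n) * ee \<alpha> (p + 1 + (lo + int n) + 1) = ee \<alpha> (int (Suc n)) * ee \<alpha> (p + (lo + int n) + 1)"
    unfolding ee_add by (rule arg_cong[where f="ee \<alpha>"]) simp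
  show ?case
    unfolding e1 unfolding I prod.insert[OF finite_atLeastAtMost_int nI] f1 f2
    by (rule tel_alg[OF Suc ee])
qed

lemma tel':
  assumes "\<alpha> > 0" "lo \<le> hi + 1"
  shows "(\<Prod>j\<in>{lo..hi}. zi \<alpha> (p + 1) - zi \<alpha> j) * of_real (sn \<alpha> (p - hi))
     = ee \<alpha> (hi - lo + 1) * of_real (sn \<alpha> (p + 1 - lo)) * (\<Prod>j\<in>{lo..hi}. zi \<alpha> p - zi \<alpha> j)"
proof -
  define n where "n = nat (hi - lo + 1)"
  have h: "hi = lo + int n - 1" "hi - lo + 1 = int n" using assms unfolding n_def by auto
  show ?thesis unfolding h(2) by (subst (1 2 3) h(1)) (rule tel[OF assms(1)])
qed

lemma zi_periodic: "\<alpha> > 0 \<Longrightarrow> zi \<alpha> (j + 2 * int \<alpha>) = zi \<alpha> j"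
proof -
  assume a: "\<alpha> > 0"
  have "\<i> * of_real (pi * (2 * real_of_int (j + 2 * int \<alpha>) + 1) / (2 * real \<alpha>)) =
        \<i> * of_real (pi * (2 * real_of_int j + 1) / (2 * real \<alpha>)) + 2 * pi * \<i>"
    using a by (simp add: field_simps)
  then show ?thesis unfolding zi_def by (simp add: exp_add)
qed

lemma prod_nat_int0:
  "(\<Prod>j\<in>{a..b}. f (zz \<alpha> j)) = (\<Prod>j\<in>{int a..int b}. f (zi \<alpha> j))"
proof -
  have "{int a..int b} = int ` {a..b}" by (simp add: image_int_atLeastAtMost)
  then show ?thesis by (simp add: prod.reindex zz_zi)
qed


lemma sn_nonzero:
  assumes "0 < \<bar>d\<bar>" "\<bar>d\<bar> < 2 * int \<alpha>"
  shows "sn \<alpha> d \<noteq> 0"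
proof
  assume "sn \<alpha> d = 0"
  then obtain i :: int where i: "pi * real_of_int d / (2 * real \<alpha>) = real_of_int i * pi"
    unfolding sn_def by (auto simp: sin_zero_iff_int2)
  have a: "\<alpha> > 0" using assms by auto
  then have "real_of_int d = real_of_int i * (2 * real \<alpha>)" using i by (simp add: field_simps)
  then have "real_of_int d = real_of_int (i * (2 * int \<alpha>))" by simp
  then have di: "d = i * (2 * int \<alpha>)" by (simp only: of_int_eq_iff)
  show False
  proof (cases "i = 0")
    case True
    then show ?thesis using di assms by simp
  next
    case False
    then have "1 \<le> \<bar>i\<bar>" by simp
    then have m: "int \<alpha> \<le> \<bar>i\<bar> * int \<alpha>" using mult_right_mono[of 1 "\<bar>i\<bar>" "int \<alpha>"] by simp
    have "\<bar>d\<bar> = \<bar>i\<bar> * int \<alpha> * 2" using di by (simp add: abs_mult)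
    then show False using m assms(2) by linarith
  qed
qed

lemma zz_inj:
  assumes "\<alpha> > 0"
  shows "inj_on (zz \<alpha>) {0..<2*\<alpha>}"
proof (rule inj_onI)
  fix x y assume x: "x \<in> {0..<2*\<alpha>}" and y: "y \<in> {0..<2*\<alpha>}" and e: "zz \<alpha> x = zz \<alpha> y"
  show "x = y"
  proof (rule ccontr)
    assume "x \<noteq> y"
    then have "sn \<alpha> (int x - int y) \<noteq> 0" using x y by (intro sn_nonzero) auto
    then have "zi \<alpha> (int x) - zi \<alpha> (int y) \<noteq> 0" unfolding zi_diff[OF assms] by (simp add: ee_nonzero)
    then show False using e by (simp add: zz_zi)
  qed
qed

lemma prod_wrap:
  assumes "\<alpha> > 0" "m + q \<le> 2 * \<alpha>"
  shows "(\<Prod>j\<in>{0..<m} \<union> {2*\<alpha>-q..<2*\<alpha>}. f (zz \<alpha> j)) = (\<Prod>j\<in>{- int q..int m - 1}. f (zi \<alpha> j))"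
proof -
  have d: "{0..<m} \<inter> {2*\<alpha>-q..<2*\<alpha>} = {}" using assms by auto
  have "(\<Prod>j\<in>{0..<m} \<union> {2*\<alpha>-q..<2*\<alpha>}. f (zz \<alpha> j)) = (\<Prod>j\<in>{0..<m}. f (zz \<alpha> j)) * (\<Prod>j\<in>{2*\<alpha>-q..<2*\<alpha>}. f (zz \<alpha> j))"
    by (rule prod.union_disjoint) (use d in auto)
  also have "(\<Prod>j\<in>{0..<m}. f (zz \<alpha> j)) = (\<Prod>j\<in>{0..int m - 1}. f (zi \<alpha> j))"
  proof (rule prod.reindex_bij_witness[where i="\<lambda>j. nat j" and j="\<lambda>j. int j"])
  qed (auto simp: zz_zi)
  also have "(\<Prod>j\<in>{2*\<alpha>-q..<2*\<alpha>}. f (zz \<alpha> j)) = (\<Prod>j\<in>{- int q..-1}. f (zi \<alpha> j))"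
  proof (rule prod.reindex_bij_witness[where i="\<lambda>j. nat (j + 2 * int \<alpha>)" and j="\<lambda>j. int j - 2 * int \<alpha>"])
    fix j assume "j \<in> {2*\<alpha>-q..<2*\<alpha>}"
    then show "f (zi \<alpha> (int j - 2 * int \<alpha>)) = f (zz \<alpha> j)"
      using zi_periodic[OF assms(1), of "int j - 2 * int \<alpha>"] by (simp add: zz_zi)
  qed (use assms in auto)
  also have "(\<Prod>j\<in>{0..int m - 1}. f (zi \<alpha> j)) * (\<Prod>j\<in>{- int q..-1}. f (zi \<alpha> j)) = (\<Prod>j\<in>{- int q..int m - 1}. f (zi \<alpha> j))"
  proof -
    have "{- int q..int m - 1} = {0..int m - 1} \<union> {- int q..-1}" by auto
    then show ?thesis by (simp add: prod.union_disjoint ivl_disj_int)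
  qed
  finally show ?thesis .
qed

lemma prod_plain:
  "(\<Prod>j\<in>{a..b}. f (zz \<alpha> j)) = (\<Prod>j\<in>{int a..int b}. f (zi \<alpha> j))"
  by (rule prod_nat_int0)

lemma adj_first:
  fixes D D' :: complex
  assumes a0: "\<alpha> > 0"
    and rat: "- D' * QU (zi \<alpha> (p+1)) * QR (zi \<alpha> p) = D * QR (zi \<alpha> (p+1)) * QU (zi \<alpha> p)"
    and QR: "\<And>x. QR x = (\<Prod>j\<in>{l1..h1}. x - zi \<alpha> j)" and QU: "\<And>x. QU x = (\<Prod>j\<in>{l2..h2}. x - zi \<alpha> j)"
    and nz: "QR (zi \<alpha> p) \<noteq> 0" "QU (zi \<alpha> p) \<noteq> 0"
    and len: "h1 - l1 = h2 - l2" "l1 \<le> h1 + 1" "l2 \<le> h2 + 1"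
  shows "- D' * of_real (sn \<alpha> (p+1-l2)) * of_real (sn \<alpha> (p-h1)) = D * of_real (sn \<alpha> (p+1-l1)) * of_real (sn \<alpha> (p-h2))"
proof -
  have tR: "QR (zi \<alpha> (p+1)) * of_real (sn \<alpha> (p - h1)) = ee \<alpha> (h1 - l1 + 1) * of_real (sn \<alpha> (p + 1 - l1)) * QR (zi \<alpha> p)"
    unfolding QR by (rule tel'[OF a0 len(2)])
  have tU: "QU (zi \<alpha> (p+1)) * of_real (sn \<alpha> (p - h2)) = ee \<alpha> (h1 - l1 + 1) * of_real (sn \<alpha> (p + 1 - l2)) * QU (zi \<alpha> p)"
    unfolding QU len(1) by (rule tel'[OF a0 len(3)])
  define E where "E = ee \<alpha> (h1 - l1 + 1)"
  have E: "E \<noteq> 0" unfolding E_def by (rule ee_nonzero)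
  have "(- D' * QU (zi \<alpha> (p+1)) * QR (zi \<alpha> p)) * (of_real (sn \<alpha> (p - h1)) * of_real (sn \<alpha> (p - h2)))
      = (D * QR (zi \<alpha> (p+1)) * QU (zi \<alpha> p)) * (of_real (sn \<alpha> (p - h1)) * of_real (sn \<alpha> (p - h2)))"
    using rat by simp
  then have "(- D' * of_real (sn \<alpha> (p+1-l2)) * of_real (sn \<alpha> (p-h1))) * (E * QU (zi \<alpha> p) * QR (zi \<alpha> p))
      = (D * of_real (sn \<alpha> (p+1-l1)) * of_real (sn \<alpha> (p-h2))) * (E * QU (zi \<alpha> p) * QR (zi \<alpha> p))"
  proof -
    assume h: "(- D' * QU (zi \<alpha> (p+1)) * QR (zi \<alpha> p)) * (of_real (sn \<alpha> (p - h1)) * of_real (sn \<alpha> (p - h2)))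
      = (D * QR (zi \<alpha> (p+1)) * QU (zi \<alpha> p)) * (of_real (sn \<alpha> (p - h1)) * of_real (sn \<alpha> (p - h2)))"
    have l: "(- D' * QU (zi \<alpha> (p+1)) * QR (zi \<alpha> p)) * (of_real (sn \<alpha> (p - h1)) * of_real (sn \<alpha> (p - h2)))
       = - D' * QR (zi \<alpha> p) * of_real (sn \<alpha> (p - h1)) * (QU (zi \<alpha> (p+1)) * of_real (sn \<alpha> (p - h2)))"
      by (simp add: mult_ac)
    have r: "(D * QR (zi \<alpha> (p+1)) * QU (zi \<alpha> p)) * (of_real (sn \<alpha> (p - h1)) * of_real (sn \<alpha> (p - h2)))
       = D * QU (zi \<alpha> p) * of_real (sn \<alpha> (p - h2)) * (QR (zi \<alpha> (p+1)) * of_real (sn \<alpha> (p - h1)))"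
      by (simp add: mult_ac)
    from h show ?thesis unfolding l r tU tR E_def[symmetric] by (simp add: mult_ac)
  qed
  then show ?thesis by (subst (asm) mult_right_cancel) (use E nz in auto)
qed

lemma adj_second:
  fixes D D' :: complex
  assumes a0: "\<alpha> > 0"
    and rat: "- D' * QU (zi \<alpha> p) * QR (zi \<alpha> (p+1)) = D * QR (zi \<alpha> p) * QU (zi \<alpha> (p+1))"
    and QR: "\<And>x. QR x = (\<Prod>j\<in>{l1..h1}. x - zi \<alpha> j)" and QU: "\<And>x. QU x = (\<Prod>j\<in>{l2..h2}. x - zi \<alpha> j)"
    and nz: "QR (zi \<alpha> p) \<noteq> 0" "QU (zi \<alpha> p) \<noteq> 0"
    and len: "h1 - l1 = h2 - l2" "l1 \<le> h1 + 1" "l2 \<le> h2 + 1"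
  shows "- D' * of_real (sn \<alpha> (p+1-l1)) * of_real (sn \<alpha> (p-h2)) = D * of_real (sn \<alpha> (p+1-l2)) * of_real (sn \<alpha> (p-h1))"
proof -
  have tR: "QR (zi \<alpha> (p+1)) * of_real (sn \<alpha> (p - h1)) = ee \<alpha> (h1 - l1 + 1) * of_real (sn \<alpha> (p + 1 - l1)) * QR (zi \<alpha> p)"
    unfolding QR by (rule tel'[OF a0 len(2)])
  have tU: "QU (zi \<alpha> (p+1)) * of_real (sn \<alpha> (p - h2)) = ee \<alpha> (h1 - l1 + 1) * of_real (sn \<alpha> (p + 1 - l2)) * QU (zi \<alpha> p)"
    unfolding QU len(1) by (rule tel'[OF a0 len(3)])
  define E where "E = ee \<alpha> (h1 - l1 + 1)"
  have E: "E \<noteq> 0" unfolding E_def by (rule ee_nonzero)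
  have h: "(- D' * QU (zi \<alpha> p) * QR (zi \<alpha> (p+1))) * (of_real (sn \<alpha> (p - h1)) * of_real (sn \<alpha> (p - h2)))
      = (D * QR (zi \<alpha> p) * QU (zi \<alpha> (p+1))) * (of_real (sn \<alpha> (p - h1)) * of_real (sn \<alpha> (p - h2)))"
    using rat by simp
  have l: "(- D' * QU (zi \<alpha> p) * QR (zi \<alpha> (p+1))) * (of_real (sn \<alpha> (p - h1)) * of_real (sn \<alpha> (p - h2)))
     = - D' * QU (zi \<alpha> p) * of_real (sn \<alpha> (p - h2)) * (QR (zi \<alpha> (p+1)) * of_real (sn \<alpha> (p - h1)))"
    by (simp add: mult_ac)
  have r: "(D * QR (zi \<alpha> p) * QU (zi \<alpha> (p+1))) * (of_real (sn \<alpha> (p - h1)) * of_real (sn \<alpha> (p - h2)))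
     = D * QR (zi \<alpha> p) * of_real (sn \<alpha> (p - h1)) * (QU (zi \<alpha> (p+1)) * of_real (sn \<alpha> (p - h2)))"
    by (simp add: mult_ac)
  from h have "(- D' * of_real (sn \<alpha> (p+1-l1)) * of_real (sn \<alpha> (p-h2))) * (E * QU (zi \<alpha> p) * QR (zi \<alpha> p))
      = (D * of_real (sn \<alpha> (p+1-l2)) * of_real (sn \<alpha> (p-h1))) * (E * QU (zi \<alpha> p) * QR (zi \<alpha> p))"
    unfolding l r tU tR E_def[symmetric] by (simp add: mult_ac)
  then show ?thesis by (subst (asm) mult_right_cancel) (use E nz in auto)
qed


lemma card_swap: "finite T \<Longrightarrow> a \<notin> T \<Longrightarrow> b \<in> T \<Longrightarrow> card (insert a (T - {b})) = card T"
  by (simp add: card_Diff_singleton) (metis One_nat_def Suc_pred card_gt_0_iff empty_iff)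

lemma prod_nonzero_inj:
  assumes "inj_on (zz \<alpha>) {0..<2*\<alpha>}" "b < 2*\<alpha>" "X \<subseteq> {0..<2*\<alpha>}" "b \<notin> X"
  shows "(\<Prod>r\<in>X. zz \<alpha> b - zz \<alpha> r) \<noteq> 0"
proof -
  have "finite X" using assms(3) finite_subset by blast
  moreover have "zz \<alpha> b - zz \<alpha> r \<noteq> 0" if "r \<in> X" for r
    using assms that unfolding inj_on_def by (metis atLeastLessThan_iff eq_iff_diff_eq_0 subsetD zero_le)
  ultimately show ?thesis by simp
qed

context
  fixes k :: nat
  assumes k2: "k \<ge> 2"
begin

abbreviation "al \<equiv> 2 * k + 1"

definition "sig1 = sin (pi / (2 * real al))"

definition "T1 = {0..k} \<union> {3*k+2..4*k+1}"
definition "T1' = insert (3*k+1) (T1 - {k})"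
definition "T2bp = insert (k+1) (T1 - {k})"
definition "T2ap = insert (3*k+1) (T1 - {3*k+2})"
definition "T2bm = insert (3*k) (T1' - {3*k+1})"
definition "T2am = insert k (T1' - {k-1})"

definition "DD T = det (McW al (zz al) T)"

lemma al_pos: "al > 0" by simp

lemma inj_al: "inj_on (zz al) {0..<2*al}" by (rule zz_inj) simp

lemma T1_sub: "T1 \<subseteq> {0..<2*al}" unfolding T1_def by auto
lemma T1_card: "card T1 = al"
proof -
  have "card T1 = card {0..k} + card {3*k+2..4*k+1}" unfolding T1_def
    by (rule card_Un_disjoint) auto
  then show ?thesis by simp
qed

lemma T1'_alt: "T1' = {0..<k} \<union> {3*k+1..4*k+1}" unfolding T1'_def T1_def by auto
lemma T1'_sub: "T1' \<subseteq> {0..<2*al}" unfolding T1'_alt by auto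
lemma T1'_card: "card T1' = al"
  unfolding T1'_def using T1_card T1_sub by (subst card_swap) (auto simp: T1_def finite_subset)

lemma sn_1: "d = 1 \<Longrightarrow> sn al d = sig1" unfolding sn_def sig1_def by simp
lemma sn_m1: "d = -1 \<Longrightarrow> sn al d = - sig1" unfolding sn_def sig1_def by simp
lemma sn_half: "d = 2 * int k + 1 \<Longrightarrow> sn al d = 1"
proof -
  assume d: "d = 2 * int k + 1"
  have h: "pi * real_of_int d / (2 * real al) = pi / 2" unfolding d by (simp add: field_simps)
  show ?thesis unfolding sn_def by (subst h) simp
qed
lemma sn_mhalf: "d = - 2 * int k - 1 \<Longrightarrow> sn al d = -1"
proof -
  assume d: "d = - 2 * int k - 1"
  have h: "pi * real_of_int d / (2 * real al) = - (pi / 2)" unfolding d by (simp add: field_simps)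
  show ?thesis unfolding sn_def by (subst h) simp
qed
lemma sn_mfull: "d = - 4 * int k - 1 \<Longrightarrow> sn al d = - sig1"
proof -
  assume d: "d = - 4 * int k - 1"
  have h: "pi * real_of_int d / (2 * real al) = pi / (2 * real al) - pi" unfolding d by (simp add: field_simps)
  show ?thesis unfolding sn_def sig1_def by (subst h) (simp add: sin_diff)
qed


lemma DD_T2bp: "DD T2bp * of_real (sig1^2) = - DD T1"
proof -
  let ?R = "T1 - {k}" and ?U = "{0..<2*al} - T1 - {k+1}"
  define QR where "QR x = (\<Prod>r\<in>?R. x - zz al r)" for x
  define QU where "QU x = (\<Prod>u\<in>?U. x - zz al u)" for x
  have a: "k+1 < 2*al" "k+1 \<notin> T1" and b: "k \<in> T1" unfolding T1_def by auto
  note rat0 = ratio_lemma[OF inj_al T1_sub T1_card a b]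
  have Req: "?R = {0..<k} \<union> {2*al - k..<2*al}" unfolding T1_def by auto
  have Ueq: "?U = {k+2..3*k+1}" unfolding T1_def by auto
  have QR': "QR x = (\<Prod>j\<in>{- int k..int k - 1}. x - zi al j)" for x
    unfolding QR_def Req by (rule prod_wrap) auto
  have QU': "QU x = (\<Prod>j\<in>{int (k+2)..int (3*k+1)}. x - zi al j)" for x
    unfolding QU_def Ueq by (rule prod_plain)
  have za: "zz al (k+1) = zi al (int k + 1)" and zb: "zz al k = zi al (int k)" by (simp_all add: zz_zi add.commute)
  have rat: "- DD T2bp * QU (zi al (int k + 1)) * QR (zi al (int k)) = DD T1 * QR (zi al (int k + 1)) * QU (zi al (int k))"
    using rat0 unfolding QR_def QU_def DD_def T2bp_def za zb .
  have nzR: "QR (zi al (int k)) \<noteq> 0" unfolding QR_def zb[symmetric]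
    by (rule prod_nonzero_inj[OF inj_al]) (use T1_sub in auto)
  have nzU: "QU (zi al (int k)) \<noteq> 0" unfolding QU_def zb[symmetric]
    by (rule prod_nonzero_inj[OF inj_al]) (use b in auto)
  have l: "int k - 1 - - int k = int (3*k+1) - int (k+2)" "- int k \<le> int k - 1 + 1" "int (k+2) \<le> int (3*k+1) + 1"
    by auto
  note r = adj_first[OF al_pos rat QR' QU' nzR nzU l]
  have s1: "sn al (int k + 1 - int (k+2)) = - sig1" by (rule sn_m1) simp
  have s2: "sn al (int k - (int k - 1)) = sig1" by (rule sn_1) simp
  have s3: "sn al (int k + 1 - - int k) = 1" by (rule sn_half) simp
  have s4: "sn al (int k - int (3*k+1)) = -1" by (rule sn_mhalf) simp
  have "- DD T2bp * of_real (- sig1) * of_real sig1 = DD T1 * of_real 1 * of_real (-1)"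
    using r unfolding s1 s2 s3 s4 .
  then show ?thesis by (simp add: power2_eq_square algebra_simps)
qed

lemma zz_wrap: "int j = q + 2 * int al \<Longrightarrow> zz al j = zi al q"
  using zi_periodic[OF al_pos, of q] by (simp only: zz_zi)

lemma DD_T2ap: "DD T2ap * of_real (sig1^2) = - DD T1"
proof -
  let ?R = "T1 - {3*k+2}" and ?U = "{0..<2*al} - T1 - {3*k+1}"
  define QR where "QR x = (\<Prod>r\<in>?R. x - zz al r)" for x
  define QU where "QU x = (\<Prod>u\<in>?U. x - zz al u)" for x
  have a: "3*k+1 < 2*al" "3*k+1 \<notin> T1" and b: "3*k+2 \<in> T1" unfolding T1_def using k2 by auto
  note rat0 = ratio_lemma[OF inj_al T1_sub T1_card a b]
  have Req: "?R = {0..<k+1} \<union> {2*al - (k-1)..<2*al}" unfolding T1_def using k2 by auto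
  have Ueq: "?U = {k+1..3*k}" unfolding T1_def by auto
  have QR': "QR x = (\<Prod>j\<in>{- int (k-1)..int (k+1) - 1}. x - zi al j)" for x
    unfolding QR_def Req by (rule prod_wrap) auto
  have QU': "QU x = (\<Prod>j\<in>{int (k+1)..int (3*k)}. x - zi al j)" for x
    unfolding QU_def Ueq by (rule prod_plain)
  have za: "zz al (3*k+1) = zi al (- int k - 1)" by (rule zz_wrap) simp
  have zb: "zz al (3*k+2) = zi al (- int k - 1 + 1)" by (rule zz_wrap) simp
  have rat: "- DD T2ap * QU (zi al (- int k - 1)) * QR (zi al (- int k - 1 + 1)) = DD T1 * QR (zi al (- int k - 1)) * QU (zi al (- int k - 1 + 1))"
    using rat0 unfolding QR_def QU_def DD_def T2ap_def za zb .
  have nzR: "QR (zi al (- int k - 1)) \<noteq> 0" unfolding QR_def za[symmetric]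
    by (rule prod_nonzero_inj[OF inj_al]) (use T1_sub a in auto)
  have nzU: "QU (zi al (- int k - 1)) \<noteq> 0" unfolding QU_def za[symmetric]
    by (rule prod_nonzero_inj[OF inj_al]) auto
  have l: "int (k+1) - 1 - - int (k-1) = int (3*k) - int (k+1)" "- int (k-1) \<le> int (k+1) - 1 + 1" "int (k+1) \<le> int (3*k) + 1"
    using k2 by auto
  note r = adj_second[OF al_pos rat QR' QU' nzR nzU l]
  have s1: "sn al (- int k - 1 + 1 - - int (k-1)) = - sig1" by (rule sn_m1) (use k2 in simp)
  have s2: "sn al (- int k - 1 - int (3*k)) = - sig1" by (rule sn_mfull) simp
  have s3: "sn al (- int k - 1 + 1 - int (k+1)) = -1" by (rule sn_mhalf) simp
  have s4: "sn al (- int k - 1 - (int (k+1) - 1)) = -1" by (rule sn_mhalf) simp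
  have "- DD T2ap * of_real (- sig1) * of_real (- sig1) = DD T1 * of_real (-1) * of_real (-1)"
    using r unfolding s1 s2 s3 s4 .
  then have "- (DD T2ap * of_real (sig1^2)) = DD T1" by (simp add: power2_eq_square algebra_simps)
  then show ?thesis by (metis minus_minus)
qed

lemma DD_T2bm: "DD T2bm * of_real (sig1^2) = - DD T1'"
proof -
  let ?R = "T1' - {3*k+1}" and ?U = "{0..<2*al} - T1' - {3*k}"
  define QR where "QR x = (\<Prod>r\<in>?R. x - zz al r)" for x
  define QU where "QU x = (\<Prod>u\<in>?U. x - zz al u)" for x
  have a: "3*k < 2*al" "3*k \<notin> T1'" and b: "3*k+1 \<in> T1'" unfolding T1'_alt using k2 by auto
  note rat0 = ratio_lemma[OF inj_al T1'_sub T1'_card a b]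
  have Req: "?R = {0..<k} \<union> {2*al - k..<2*al}" unfolding T1'_alt by auto
  have Ueq: "?U = {k..3*k-1}" unfolding T1'_alt using k2 by auto
  have QR': "QR x = (\<Prod>j\<in>{- int k..int k - 1}. x - zi al j)" for x
    unfolding QR_def Req by (rule prod_wrap) auto
  have QU': "QU x = (\<Prod>j\<in>{int k..int (3*k-1)}. x - zi al j)" for x
    unfolding QU_def Ueq by (rule prod_plain)
  have za: "zz al (3*k) = zi al (- int k - 2)" by (rule zz_wrap) simp
  have zb: "zz al (3*k+1) = zi al (- int k - 2 + 1)" by (rule zz_wrap) simp
  have rat: "- DD T2bm * QU (zi al (- int k - 2)) * QR (zi al (- int k - 2 + 1)) = DD T1' * QR (zi al (- int k - 2)) * QU (zi al (- int k - 2 + 1))"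
    using rat0 unfolding QR_def QU_def DD_def T2bm_def za zb .
  have nzR: "QR (zi al (- int k - 2)) \<noteq> 0" unfolding QR_def za[symmetric]
    by (rule prod_nonzero_inj[OF inj_al]) (use T1'_sub a in auto)
  have nzU: "QU (zi al (- int k - 2)) \<noteq> 0" unfolding QU_def za[symmetric]
    by (rule prod_nonzero_inj[OF inj_al]) auto
  have l: "int k - 1 - - int k = int (3*k-1) - int k" "- int k \<le> int k - 1 + 1" "int k \<le> int (3*k-1) + 1"
    using k2 by auto
  note r = adj_second[OF al_pos rat QR' QU' nzR nzU l]
  have s1: "sn al (- int k - 2 + 1 - - int k) = - sig1" by (rule sn_m1) simp
  have s2: "sn al (- int k - 2 - int (3*k-1)) = - sig1" by (rule sn_mfull) (use k2 in simp)
  have s3: "sn al (- int k - 2 + 1 - int k) = -1" by (rule sn_mhalf) simp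
  have s4: "sn al (- int k - 2 - (int k - 1)) = -1" by (rule sn_mhalf) simp
  have "- DD T2bm * of_real (- sig1) * of_real (- sig1) = DD T1' * of_real (-1) * of_real (-1)"
    using r unfolding s1 s2 s3 s4 .
  then have "- (DD T2bm * of_real (sig1^2)) = DD T1'" by (simp add: power2_eq_square algebra_simps)
  then show ?thesis by (metis minus_minus)
qed

lemma DD_T2am: "DD T2am * of_real (sig1^2) = - DD T1'"
proof -
  let ?R = "T1' - {k-1}" and ?U = "{0..<2*al} - T1' - {k}"
  define QR where "QR x = (\<Prod>r\<in>?R. x - zz al r)" for x
  define QU where "QU x = (\<Prod>u\<in>?U. x - zz al u)" for x
  have a: "k < 2*al" "k \<notin> T1'" and b: "k-1 \<in> T1'" unfolding T1'_alt using k2 by auto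
  note rat0 = ratio_lemma[OF inj_al T1'_sub T1'_card a b]
  have Req: "?R = {0..<k-1} \<union> {2*al - (k+1)..<2*al}" unfolding T1'_alt using k2 by auto
  have Ueq: "?U = {k+1..3*k}" unfolding T1'_alt by auto
  have QR': "QR x = (\<Prod>j\<in>{- int (k+1)..int (k-1) - 1}. x - zi al j)" for x
    unfolding QR_def Req by (rule prod_wrap) auto
  have QU': "QU x = (\<Prod>j\<in>{int (k+1)..int (3*k)}. x - zi al j)" for x
    unfolding QU_def Ueq by (rule prod_plain)
  have za: "zz al k = zi al (int k - 1 + 1)" by (simp add: zz_zi)
  have zb: "zz al (k-1) = zi al (int k - 1)" using k2 by (simp add: zz_zi of_nat_diff)
  have rat: "- DD T2am * QU (zi al (int k - 1 + 1)) * QR (zi al (int k - 1)) = DD T1' * QR (zi al (int k - 1 + 1)) * QU (zi al (int k - 1))"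
    using rat0 unfolding QR_def QU_def DD_def T2am_def za zb .
  have nzR: "QR (zi al (int k - 1)) \<noteq> 0" unfolding QR_def zb[symmetric]
    by (rule prod_nonzero_inj[OF inj_al]) (use T1'_sub k2 in auto)
  have nzU: "QU (zi al (int k - 1)) \<noteq> 0" unfolding QU_def zb[symmetric]
    by (rule prod_nonzero_inj[OF inj_al]) (use b in auto)
  have l: "int (k-1) - 1 - - int (k+1) = int (3*k) - int (k+1)" "- int (k+1) \<le> int (k-1) - 1 + 1" "int (k+1) \<le> int (3*k) + 1"
    using k2 by auto
  note r = adj_first[OF al_pos rat QR' QU' nzR nzU l]
  have s1: "sn al (int k - 1 + 1 - int (k+1)) = - sig1" by (rule sn_m1) simp
  have s2: "sn al (int k - 1 - (int (k-1) - 1)) = sig1" by (rule sn_1) (use k2 in simp)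
  have s3: "sn al (int k - 1 + 1 - - int (k+1)) = 1" by (rule sn_half) simp
  have s4: "sn al (int k - 1 - int (3*k)) = -1" by (rule sn_mhalf) simp
  have "- DD T2am * of_real (- sig1) * of_real sig1 = DD T1' * of_real 1 * of_real (-1)"
    using r unfolding s1 s2 s3 s4 .
  then show ?thesis by (simp add: power2_eq_square algebra_simps)
qed

lemma sig1_pos: "sig1 > 0"
  unfolding sig1_def
proof (rule sin_gt_zero)
  have p: "pi > 0" by (rule pi_gt_zero)
  show "0 < pi / (2 * real al)" using p by simp
  have "pi * 1 < pi * (2 * real al)" using p by (intro mult_strict_left_mono) auto
  then show "pi / (2 * real al) < pi" using p by (simp add: divide_less_eq)
qed


definition "th j = pi * real_of_int (int k + 1 + j) / (2 * real al)"

lemma sn_A: "d = - int k - 1 - (j + (2 * int k + 1)) \<Longrightarrow> sn al d = - cos (th j)"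
proof -
  assume d: "d = - int k - 1 - (j + (2 * int k + 1))"
  have h: "pi * real_of_int d / (2 * real al) = - th j - pi / 2"
    unfolding d th_def by (simp add: field_simps)
  show ?thesis unfolding sn_def by (subst h) (simp add: sin_diff)
qed

lemma sn_B: "d = int k - j \<Longrightarrow> sn al d = cos (th j)"
proof -
  assume d: "d = int k - j"
  have h: "pi * real_of_int d / (2 * real al) = pi / 2 - th j"
    unfolding d th_def by (simp add: field_simps)
  show ?thesis unfolding sn_def by (subst h) (simp add: sin_diff)
qed

lemma sn_C: "d = - int k - 1 - j \<Longrightarrow> sn al d = - sin (th j)"
proof -
  assume d: "d = - int k - 1 - j"
  have h: "pi * real_of_int d / (2 * real al) = - th j"
    unfolding d th_def by (simp add: field_simps)
  show ?thesis unfolding sn_def by (subst h) simp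
qed

lemma th_refl: "th (-1 - j) = pi / 2 - th j"
  unfolding th_def by (simp add: field_simps)

lemma f12: "(zi al (- int k - 1) - zi al (j + (2 * int k + 1))) * (zi al (int k) - zi al j)
   = 4 * ee al (2 * j + 2 * int k + 2) * of_real ((cos (th j))^2)"
proof -
  have s1: "sn al (- int k - 1 - (j + (2 * int k + 1))) = - cos (th j)" by (rule sn_A) simp
  have s2: "sn al (int k - j) = cos (th j)" by (rule sn_B) simp
  have e: "ee al (2 * j + 2 * int k + 2) = ee al (- int k - 1 + (j + (2 * int k + 1)) + 1) * ee al (int k + j + 1)"
    unfolding ee_add by (rule arg_cong[where f="ee al"]) simp
  show ?thesis unfolding zi_diff[OF al_pos] s1 s2 e
    by (simp add: power2_eq_square algebra_simps)
qed

lemma f34: "(zi al (- int k - 1) - zi al j) * (zi al (int k) - zi al (j + (2 * int k + 1)))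
   = 4 * ee al (2 * j + 2 * int k + 2) * of_real (- ((sin (th j))^2))"
proof -
  have s1: "sn al (- int k - 1 - j) = - sin (th j)" by (rule sn_C) simp
  have s2: "sn al (int k - (j + (2 * int k + 1))) = - sin (th j)" by (rule sn_C) simp
  have e: "ee al (2 * j + 2 * int k + 2) = ee al (- int k - 1 + j + 1) * ee al (int k + (j + (2 * int k + 1)) + 1)"
    unfolding ee_add by (rule arg_cong[where f="ee al"]) simp
  show ?thesis unfolding zi_diff[OF al_pos] s1 s2 e
    by (simp add: power2_eq_square algebra_simps)
qed

lemma cos_sin_prod: "(\<Prod>j\<in>{- int k..int k - 1}. (cos (th j))^2) = (\<Prod>j\<in>{- int k..int k - 1}. (sin (th j))^2)"
proof -
  have "(\<Prod>j\<in>{- int k..int k - 1}. (cos (th j))^2) = (\<Prod>j\<in>{- int k..int k - 1}. (cos (th (-1 - j)))^2)"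
    by (rule prod.reindex_bij_witness[where i="\<lambda>j. -1 - j" and j="\<lambda>j. -1 - j"]) auto
  also have "\<dots> = (\<Prod>j\<in>{- int k..int k - 1}. (sin (th j))^2)"
    unfolding th_refl by (simp add: sin_cos_eq)
  finally show ?thesis .
qed

lemma DD_T1': "DD T1' = - DD T1"
proof -
  let ?R = "T1 - {k}" and ?U = "{0..<2*al} - T1 - {3*k+1}"
  let ?R' = "{- int k..int k - 1}"
  define QR where "QR x = (\<Prod>r\<in>?R. x - zz al r)" for x
  define QU where "QU x = (\<Prod>u\<in>?U. x - zz al u)" for x
  have a: "3*k+1 < 2*al" "3*k+1 \<notin> T1" and b: "k \<in> T1" unfolding T1_def by auto
  note rat0 = ratio_lemma[OF inj_al T1_sub T1_card a b]
  have Req: "?R = {0..<k} \<union> {2*al - k..<2*al}" unfolding T1_def by auto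
  have Ueq: "?U = {k+1..3*k}" unfolding T1_def by auto
  have QR': "QR x = (\<Prod>j\<in>?R'. x - zi al j)" for x
    unfolding QR_def Req by (rule prod_wrap) auto
  have QU': "QU x = (\<Prod>j\<in>?R'. x - zi al (j + (2 * int k + 1)))" for x
  proof -
    have "QU x = (\<Prod>j\<in>{int (k+1)..int (3*k)}. x - zi al j)"
      unfolding QU_def Ueq by (rule prod_plain)
    also have "\<dots> = (\<Prod>j\<in>?R'. x - zi al (j + (2 * int k + 1)))"
      by (rule prod.reindex_bij_witness[where j="\<lambda>j. j - (2 * int k + 1)" and i="\<lambda>j. j + (2 * int k + 1)"]) auto
    finally show ?thesis .
  qed
  have za: "zz al (3*k+1) = zi al (- int k - 1)" by (rule zz_wrap) simp
  have zb: "zz al k = zi al (int k)" by (simp add: zz_zi)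
  have rat: "- DD T1' * QU (zi al (- int k - 1)) * QR (zi al (int k)) = DD T1 * QR (zi al (- int k - 1)) * QU (zi al (int k))"
    using rat0 unfolding QR_def QU_def DD_def T1'_def za zb .
  have nzR: "QR (zi al (int k)) \<noteq> 0" unfolding QR_def zb[symmetric]
    by (rule prod_nonzero_inj[OF inj_al]) (use T1_sub in auto)
  have nzU: "QU (zi al (- int k - 1)) \<noteq> 0" unfolding QU_def za[symmetric]
    by (rule prod_nonzero_inj[OF inj_al]) auto
  have cR: "card ?R' = 2 * k" by simp
  have key: "QU (zi al (- int k - 1)) * QR (zi al (int k)) = QR (zi al (- int k - 1)) * QU (zi al (int k))"
  proof -
    have "QU (zi al (- int k - 1)) * QR (zi al (int k)) = (\<Prod>j\<in>?R'. 4 * ee al (2 * j + 2 * int k + 2) * of_real ((cos (th j))^2))"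
      unfolding QR' QU' prod.distrib[symmetric] f12 ..
    also have "\<dots> = (\<Prod>j\<in>?R'. 4 * ee al (2 * j + 2 * int k + 2)) * of_real (\<Prod>j\<in>?R'. (cos (th j))^2)"
      by (simp add: prod.distrib)
    also have "\<dots> = (\<Prod>j\<in>?R'. 4 * ee al (2 * j + 2 * int k + 2)) * of_real (\<Prod>j\<in>?R'. - ((sin (th j))^2))"
      unfolding cos_sin_prod prod_uminus cR by simp
    also have "\<dots> = (\<Prod>j\<in>?R'. 4 * ee al (2 * j + 2 * int k + 2) * of_real (- ((sin (th j))^2)))"
      by (simp only: prod.distrib of_real_prod)
    also have "\<dots> = QR (zi al (- int k - 1)) * QU (zi al (int k))"
      unfolding QR' QU' prod.distrib[symmetric] f34 ..
    finally show ?thesis .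
  qed
  have "- DD T1' * (QU (zi al (- int k - 1)) * QR (zi al (int k))) = DD T1 * (QU (zi al (- int k - 1)) * QR (zi al (int k)))"
  proof -
    have h1: "- DD T1' * (QU (zi al (- int k - 1)) * QR (zi al (int k))) = DD T1 * (QR (zi al (- int k - 1)) * QU (zi al (int k)))"
      using rat by (simp only: mult.assoc)
    show ?thesis using h1 key by metis
  qed
  then have "- DD T1' = DD T1" by (subst (asm) mult_right_cancel) (use nzR nzU in auto)
  then show ?thesis by (metis minus_minus)
qed

end


definition ang :: "nat \<Rightarrow> nat \<Rightarrow> real" where
  "ang \<alpha> j = pi * (2 * real j + 1) / (2 * real \<alpha>)"

lemma zz_cis: "zz \<alpha> j = cis (ang \<alpha> j)"
  unfolding zz_zi zi_def ang_def cis_conv_exp by (simp add: mult.commute)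

lemma cis_2pi_minus: "cis (2 * pi - x) = cnj (cis x)"
  by (simp add: complex_eq_iff cos_diff sin_diff)

context
  fixes k :: nat
  assumes k2: "k \<ge> 2"
begin

lemma ang_refl: "j \<le> 4*k+1 \<Longrightarrow> ang (al k) (4*k+1-j) = 2 * pi - ang (al k) j"
  unfolding ang_def by (simp add: of_nat_diff field_simps)

lemma zz_refl: "j \<le> 4*k+1 \<Longrightarrow> zz (al k) (4*k+1-j) = cnj (zz (al k) j)"
  unfolding zz_cis by (simp only: ang_refl cis_2pi_minus)

lemma Re_zz: "Re (zz (al k) j) = cos (ang (al k) j)" unfolding zz_cis by simp

lemma Re_refl: assumes "j \<le> 4*k+1" shows "Re (zz (al k) (4*k+1-j)) = Re (zz (al k) j)"
proof -
  have "zz (al k) (4*k+1-j) = cnj (zz (al k) j)" by (rule zz_refl[OF assms])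
  then show ?thesis by simp
qed

definition "dl = cc (al k) (2*k-1)"
definition "bt = cc (al k) (2*k-3)"
definition "sv = ss (al k) (2*k-1)"

lemma ang_km1: "ang (al k) (k-1) = real (2*k-1) * pi / (2 * real (al k))"
  unfolding ang_def using k2 by (simp add: of_nat_diff field_simps)

lemma zz_km1: "zz (al k) (k-1) = Complex dl sv"
  unfolding zz_cis ang_km1 dl_def sv_def cc_def ss_def by (simp add: complex_eq_iff)

lemma zz_k: "zz (al k) k = \<i>"
proof -
  have h: "ang (al k) k = pi / 2" unfolding ang_def by (simp add: field_simps)
  show ?thesis unfolding zz_cis h by (simp add: complex_eq_iff)
qed

lemma zz_kp1: "zz (al k) (k+1) = Complex (- dl) sv"
proof -
  have "ang (al k) (k+1) = pi - real (2*k-1) * pi / (2 * real (al k))"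
    unfolding ang_def using k2 by (simp add: of_nat_diff field_simps)
  then show ?thesis unfolding zz_cis dl_def sv_def cc_def ss_def by (simp add: complex_eq_iff)
qed

lemma zz_3k: "zz (al k) (3*k) = Complex (- dl) (- sv)"
proof -
  have "zz (al k) (3*k) = cnj (zz (al k) (k+1))" using zz_refl[of "k+1"] by simp
  also have "\<dots> = cnj (Complex (- dl) sv)" unfolding zz_kp1 ..
  finally show ?thesis by (simp add: complex_eq_iff)
qed

lemma zz_3kp1: "zz (al k) (3*k+1) = - \<i>"
proof -
  have "zz (al k) (3*k+1) = cnj (zz (al k) (k))" using zz_refl[of "k"] by simp
  also have "\<dots> = cnj (\<i>)" unfolding zz_k ..
  finally show ?thesis by (simp add: complex_eq_iff)
qed

lemma zz_3kp2: "zz (al k) (3*k+2) = Complex dl (- sv)"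
proof -
  have "zz (al k) (3*k+2) = cnj (zz (al k) (k-1))" using zz_refl[of "k-1"] k2 by simp
  also have "\<dots> = cnj (Complex dl sv)" unfolding zz_km1 ..
  finally show ?thesis by (simp add: complex_eq_iff)
qed

lemma dl_alt: "dl = sin (pi / real (al k))"
proof -
  have "real (2*k-1) * pi / (2 * real (al k)) = pi / 2 - pi / real (al k)"
    using k2 by (simp add: of_nat_diff field_simps)
  then show ?thesis unfolding dl_def cc_def by (simp add: cos_diff)
qed

lemma bt_alt: "bt = sin (2 * pi / real (al k))"
proof -
  have "real (2*k-3) * pi / (2 * real (al k)) = pi / 2 - 2 * pi / real (al k)"
    using k2 by (simp add: of_nat_diff field_simps)
  then show ?thesis unfolding bt_def cc_def by (simp add: cos_diff)
qed

lemma pi_al: "0 < pi / real (al k)" "2 * pi / real (al k) < pi" "pi / real (al k) < pi"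
proof -
  show "0 < pi / real (al k)" by simp
  have "2 < real (al k)" using k2 by simp
  then have "pi * 2 < pi * real (al k)" using pi_gt_zero by (rule mult_strict_left_mono)
  then show "2 * pi / real (al k) < pi" by (simp add: divide_less_eq mult.commute)
  have "1 < real (al k)" using k2 by simp
  then have "pi * 1 < pi * real (al k)" using pi_gt_zero by (rule mult_strict_left_mono)
  then show "pi / real (al k) < pi" by (simp add: divide_less_eq mult.commute)
qed

lemma dl_pos: "dl > 0"
  unfolding dl_alt using pi_al by (intro sin_gt_zero) auto

lemma bt_pos: "bt > 0"
  unfolding bt_alt using pi_al by (intro sin_gt_zero) auto

lemma bt_le: "bt \<le> 2 * dl"
proof -
  have "bt = 2 * sin (pi / real (al k)) * cos (pi / real (al k))"
    unfolding bt_alt using sin_double[of "pi / real (al k)"] by (simp add: mult.assoc)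
  also have "\<dots> \<le> 2 * sin (pi / real (al k)) * 1"
    using dl_pos unfolding dl_alt by (intro mult_left_mono) auto
  finally show ?thesis unfolding dl_alt by simp
qed

lemma dl_lt_bt: "dl < bt"
proof -
  have c: "cos (pi / real (al k)) > 1/2"
  proof -
    have "pi / real (al k) < pi / 3" by (rule frac_less2) (use k2 pi_gt_zero in auto)
    then have "cos (pi / 3) < cos (pi / real (al k))"
      using pi_al by (intro cos_monotone_0_pi) auto
    then show ?thesis by (simp add: cos_60)
  qed
  have "bt = 2 * sin (pi / real (al k)) * cos (pi / real (al k))"
    unfolding bt_alt using sin_double[of "pi / real (al k)"] by (simp add: mult.assoc)
  moreover have "sin (pi / real (al k)) * 1 < sin (pi / real (al k)) * (2 * cos (pi / real (al k)))"
    using dl_pos c unfolding dl_alt by (intro mult_strict_left_mono) auto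
  ultimately show ?thesis unfolding dl_alt by (simp add: mult_ac)
qed

end


lemma sum_swap: "finite T \<Longrightarrow> a \<notin> T \<Longrightarrow> b \<in> T \<Longrightarrow>
   (\<Sum>j\<in>insert a (T - {b}). f j) = (\<Sum>j\<in>T. f j) - f b + f a"
  for f :: "nat \<Rightarrow> 'a::ab_group_add"
proof -
  assume T: "finite T" "a \<notin> T" "b \<in> T"
  have "(\<Sum>j\<in>insert a (T - {b}). f j) = f a + (\<Sum>j\<in>T - {b}. f j)"
    using T by (intro sum.insert) auto
  also have "(\<Sum>j\<in>T - {b}. f j) = (\<Sum>j\<in>T. f j) - f b"
    using T by (simp add: sum_diff1)
  finally show ?thesis by (simp add: algebra_simps)
qed

context
  fixes k :: nat
  assumes k2: "k \<ge> 2"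
begin

definition "Pos = {0..<k} \<union> {3*k+2..4*k+1}"

lemma T1_Pos: "T1 k = insert k Pos" unfolding T1_def[OF k2] Pos_def by auto

lemma gamma1_alt: "gamma1 k = 2 * (\<Sum>j<k. cos (ang (al k) j))"
proof -
  define m where "m = k - 2"
  have km: "k = m + 2" unfolding m_def using k2 by simp
  have split: "(\<Sum>j<k. g j) = (\<Sum>j<m. g j) + g m + g (m+1)" for g :: "nat \<Rightarrow> real"
    unfolding km by simp
  have f: "cos (ang (al k) j) = cc (al k) (2 * j + 1)" for j
    unfolding ang_def cc_def by (simp add: field_simps)
  have "(\<Sum>j<k. cos (ang (al k) j)) = (\<Sum>j<m. cc (al k) (2 * j + 1)) + cc (al k) (2 * m + 1) + cc (al k) (2 * (m+1) + 1)"
    unfolding f by (rule split)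
  also have "(\<Sum>j<m. cc (al k) (2 * j + 1)) = (\<Sum>j = 1..m. cc (al k) (2 * j - 1))"
    by (rule sum.reindex_bij_witness[where i="\<lambda>j. j - 1" and j="\<lambda>j. j + 1"]) auto
  finally have e: "(\<Sum>j<k. cos (ang (al k) j)) = (\<Sum>j = 1..m. cc (al k) (2 * j - 1)) + cc (al k) (2 * m + 1) + cc (al k) (2 * (m+1) + 1)" .
  have "2 * m + 1 = 2 * k - 3" "2 * (m+1) + 1 = 2 * k - 1" "k - 2 = m" unfolding km by auto
  then show ?thesis unfolding gamma1_def sigma_def e by (simp add: algebra_simps)
qed

lemma gamma2_alt: "gamma2 k = gamma1 k - dl k" unfolding gamma1_def gamma2_def dl_def[OF k2] by simp
lemma gamma3_alt: "gamma3 k = gamma1 k - bt k" unfolding gamma1_def gamma3_def bt_def[OF k2] by simp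

lemma sum_Pos: "(\<Sum>j\<in>Pos. zz (al k) j) = of_real (gamma1 k)"
proof -
  have d: "{0..<k} \<inter> {3*k+2..4*k+1} = {}" by auto
  have r: "(\<Sum>j\<in>{3*k+2..4*k+1}. zz (al k) j) = (\<Sum>j\<in>{0..<k}. cnj (zz (al k) j))"
  proof (rule sum.reindex_bij_witness[where i="\<lambda>j. 4*k+1-j" and j="\<lambda>j. 4*k+1-j"])
    fix j assume j: "j \<in> {3*k+2..4*k+1}"
    have "zz (al k) (4*k+1-(4*k+1-j)) = cnj (zz (al k) (4*k+1-j))" by (rule zz_refl[OF k2]) simp
    then show "cnj (zz (al k) (4*k+1-j)) = zz (al k) j" using j by simp
  qed auto
  have "(\<Sum>j\<in>Pos. zz (al k) j) = (\<Sum>j\<in>{0..<k}. zz (al k) j) + (\<Sum>j\<in>{3*k+2..4*k+1}. zz (al k) j)"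
    unfolding Pos_def by (rule sum.union_disjoint) (use d in auto)
  also have "\<dots> = (\<Sum>j\<in>{0..<k}. zz (al k) j) + (\<Sum>j\<in>{0..<k}. cnj (zz (al k) j))"
    unfolding r ..
  also have "\<dots> = (\<Sum>j\<in>{0..<k}. of_real (2 * Re (zz (al k) j)))"
    unfolding sum.distrib[symmetric] by (rule sum.cong) (auto simp: complex_add_cnj)
  also have "\<dots> = of_real (gamma1 k)"
    unfolding gamma1_alt Re_zz[OF k2] by (simp add: sum_distrib_left lessThan_atLeast0)
  finally show ?thesis .
qed

lemma fin_Pos: "finite Pos" unfolding Pos_def by simp

lemma sum_T1: "(\<Sum>j\<in>T1 k. zz (al k) j) = Complex (gamma1 k) 1"
proof -
  have "k \<notin> Pos" unfolding Pos_def by auto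
  then have "(\<Sum>j\<in>T1 k. zz (al k) j) = zz (al k) k + of_real (gamma1 k)"
    unfolding T1_Pos using fin_Pos sum_Pos by simp
  then show ?thesis unfolding zz_k[OF k2] by (simp add: complex_eq_iff)
qed

lemma fin_T1: "finite (T1 k)" unfolding T1_def[OF k2] by simp

lemma sum_T1': "(\<Sum>j\<in>T1' k. zz (al k) j) = Complex (gamma1 k) (-1)"
proof -
  have "(\<Sum>j\<in>T1' k. zz (al k) j) = (\<Sum>j\<in>T1 k. zz (al k) j) - zz (al k) k + zz (al k) (3*k+1)"
    unfolding T1'_def[OF k2] by (rule sum_swap[OF fin_T1]) (auto simp: T1_def[OF k2])
  then show ?thesis unfolding sum_T1 zz_k[OF k2] zz_3kp1[OF k2] by (simp add: complex_eq_iff)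
qed

lemma sum_T2bp: "(\<Sum>j\<in>T2bp k. zz (al k) j) = Complex (gamma2 k) (sv k)"
proof -
  have "(\<Sum>j\<in>T2bp k. zz (al k) j) = (\<Sum>j\<in>T1 k. zz (al k) j) - zz (al k) k + zz (al k) (k+1)"
    unfolding T2bp_def[OF k2] by (rule sum_swap[OF fin_T1]) (auto simp: T1_def[OF k2])
  then show ?thesis unfolding sum_T1 zz_k[OF k2] zz_kp1[OF k2] gamma2_alt by (simp add: complex_eq_iff)
qed

lemma sum_T2ap: "(\<Sum>j\<in>T2ap k. zz (al k) j) = Complex (gamma2 k) (sv k)"
proof -
  have "(\<Sum>j\<in>T2ap k. zz (al k) j) = (\<Sum>j\<in>T1 k. zz (al k) j) - zz (al k) (3*k+2) + zz (al k) (3*k+1)"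
    unfolding T2ap_def[OF k2] by (rule sum_swap[OF fin_T1]) (use k2 in \<open>auto simp: T1_def[OF k2]\<close>)
  then show ?thesis unfolding sum_T1 zz_3kp2[OF k2] zz_3kp1[OF k2] gamma2_alt by (simp add: complex_eq_iff)
qed

lemma fin_T1': "finite (T1' k)" unfolding T1'_def[OF k2] using fin_T1 by simp

lemma sum_T2bm: "(\<Sum>j\<in>T2bm k. zz (al k) j) = Complex (gamma2 k) (- sv k)"
proof -
  have "(\<Sum>j\<in>T2bm k. zz (al k) j) = (\<Sum>j\<in>T1' k. zz (al k) j) - zz (al k) (3*k+1) + zz (al k) (3*k)"
    unfolding T2bm_def[OF k2] by (rule sum_swap[OF fin_T1']) (use k2 in \<open>auto simp: T1'_alt[OF k2]\<close>)
  then show ?thesis unfolding sum_T1' zz_3k[OF k2] zz_3kp1[OF k2] gamma2_alt by (simp add: complex_eq_iff)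
qed

lemma sum_T2am: "(\<Sum>j\<in>T2am k. zz (al k) j) = Complex (gamma2 k) (- sv k)"
proof -
  have "(\<Sum>j\<in>T2am k. zz (al k) j) = (\<Sum>j\<in>T1' k. zz (al k) j) - zz (al k) (k-1) + zz (al k) k"
    unfolding T2am_def[OF k2] by (rule sum_swap[OF fin_T1']) (use k2 in \<open>auto simp: T1'_alt[OF k2]\<close>)
  then show ?thesis unfolding sum_T1' zz_km1[OF k2] zz_k[OF k2] gamma2_alt by (simp add: complex_eq_iff)
qed

end


lemma six_cases:
  fixes b1 b2 b3 b4 b5 b6 :: bool
  assumes "of_bool b1 + of_bool b2 + of_bool b3 + of_bool b4 + of_bool b5 + of_bool b6 = (3::nat)"
  shows "of_bool b1 + of_bool b6 \<le> (of_bool b3 + of_bool b4 :: nat)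
    \<or> (b1 \<and> b2 \<and> \<not> b3 \<and> \<not> b4 \<and> \<not> b5 \<and> b6)
    \<or> (b1 \<and> \<not> b2 \<and> \<not> b3 \<and> \<not> b4 \<and> b5 \<and> b6)
    \<or> (b1 \<and> \<not> b2 \<and> b3 \<and> \<not> b4 \<and> \<not> b5 \<and> b6)
    \<or> (b1 \<and> \<not> b2 \<and> \<not> b3 \<and> b4 \<and> \<not> b5 \<and> b6)
    \<or> (b1 \<and> b2 \<and> \<not> b3 \<and> \<not> b4 \<and> b5 \<and> \<not> b6)
    \<or> (\<not> b1 \<and> b2 \<and> \<not> b3 \<and> \<not> b4 \<and> b5 \<and> b6)"
  using assms by (cases b1; cases b2; cases b3; cases b4; cases b5; cases b6) auto

lemma ang_nonneg: "0 \<le> ang \<alpha> j" unfolding ang_def by simp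

lemma ang_mono: "i \<le> j \<Longrightarrow> ang \<alpha> i \<le> ang \<alpha> j"
  unfolding ang_def by (intro divide_right_mono mult_left_mono) auto

lemma ang_le: assumes "\<alpha> > 0" "2*j+1 \<le> 2*\<alpha>" shows "ang \<alpha> j \<le> pi"
proof -
  have "real (2*j+1) \<le> real (2*\<alpha>)" using assms(2) by linarith
  then have "pi * real (2*j+1) \<le> pi * real (2*\<alpha>)" by (intro mult_left_mono) auto
  then show ?thesis unfolding ang_def using assms(1) by (simp add: divide_le_eq mult.commute)
qed

context
  fixes k :: nat
  assumes k2: "k \<ge> 2"
begin

definition "Bs = {0..k-2} \<union> {3*k+3..4*k+1}"
definition "Es = {k-1, k, k+1, 3*k, 3*k+1, 3*k+2}"
definition "NNs = {k+2..3*k-1}"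

abbreviation "cr j \<equiv> Re (zz (al k) j)"

lemma univ_split: "{0..<2*al k} = Bs \<union> Es \<union> NNs"
  unfolding Bs_def Es_def NNs_def using k2 by auto

lemma disj: "Bs \<inter> Es = {}" "Bs \<inter> NNs = {}" "Es \<inter> NNs = {}"
  unfolding Bs_def Es_def NNs_def using k2 by auto

lemma fins: "finite Bs" "finite Es" "finite NNs"
  unfolding Bs_def Es_def NNs_def by auto

lemma card_Bs: "card Bs = 2 * k - 2"
proof -
  have "card Bs = card {0..k-2} + card {3*k+3..4*k+1}"
    unfolding Bs_def by (rule card_Un_disjoint) (use k2 in auto)
  then show ?thesis using k2 by simp
qed


lemma cr_B1: "j \<le> k - 2 \<Longrightarrow> cr j \<ge> bt k"
proof -
  assume j: "j \<le> k - 2"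
  have e: "bt k = cos (ang (al k) (k-2))"
    unfolding bt_def[OF k2] cc_def ang_def using k2 by (simp add: of_nat_diff field_simps)
  show ?thesis unfolding Re_zz[OF k2] e
    by (rule cos_monotone_0_pi_le[OF ang_nonneg ang_mono[OF j] ang_le]) (use k2 in auto)
qed

lemma cr_B: "j \<in> Bs \<Longrightarrow> cr j \<ge> bt k"
proof -
  assume j: "j \<in> Bs"
  show ?thesis
  proof (cases "j \<le> k - 2")
    case True then show ?thesis by (rule cr_B1)
  next
    case False
    then have j': "4*k+1-j \<le> k - 2" "j \<le> 4*k+1" using j k2 unfolding Bs_def by auto
    have "cr j = cr (4*k+1-j)" using Re_refl[OF k2 j'(2)] by simp
    then show ?thesis using cr_B1[OF j'(1)] by simp
  qed
qed

lemma cr_N1: "k + 2 \<le> j \<Longrightarrow> j \<le> 2*k \<Longrightarrow> cr j \<le> - bt k"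
proof -
  assume j: "k + 2 \<le> j" "j \<le> 2*k"
  have e: "- bt k = cos (ang (al k) (k+2))"
  proof -
    have "ang (al k) (k+2) = pi - real (2*k-3) * pi / (2 * real (al k))"
      unfolding ang_def using k2 by (simp add: of_nat_diff field_simps)
    then show ?thesis unfolding bt_def[OF k2] cc_def by simp
  qed
  show ?thesis unfolding Re_zz[OF k2] e
    by (rule cos_monotone_0_pi_le[OF ang_nonneg ang_mono[OF j(1)] ang_le]) (use j k2 in auto)
qed

lemma cr_N: "j \<in> NNs \<Longrightarrow> cr j \<le> - bt k"
proof -
  assume j: "j \<in> NNs"
  show ?thesis
  proof (cases "j \<le> 2*k")
    case True then show ?thesis using j unfolding NNs_def by (intro cr_N1) auto
  next
    case False
    then have j': "k + 2 \<le> 4*k+1-j" "4*k+1-j \<le> 2*k" "j \<le> 4*k+1" using j k2 unfolding NNs_def by auto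
    have "cr j = cr (4*k+1-j)" using Re_refl[OF k2 j'(3)] by simp
    then show ?thesis using cr_N1[OF j'(1,2)] by simp
  qed
qed

lemma cr_E: "cr (k-1) = dl k" "cr k = 0" "cr (k+1) = - dl k" "cr (3*k) = - dl k" "cr (3*k+1) = 0" "cr (3*k+2) = dl k"
  unfolding zz_km1[OF k2] zz_k[OF k2] zz_kp1[OF k2] zz_3k[OF k2] zz_3kp1[OF k2] zz_3kp2[OF k2] by simp_all

lemma Es_distinct: "k - 1 \<noteq> k" "k-1 \<noteq> k+1" "k-1 \<noteq> 3*k" "k-1 \<noteq> 3*k+1" "k-1 \<noteq> 3*k+2"
   "k \<noteq> k+1" "k \<noteq> 3*k" "k \<noteq> 3*k+1" "k \<noteq> 3*k+2" "k+1 \<noteq> 3*k" "k+1 \<noteq> 3*k+1" "k+1 \<noteq> 3*k+2"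
   "3*k \<noteq> 3*k+1" "3*k \<noteq> 3*k+2" "3*k+1 \<noteq> 3*k+2"
  using k2 by auto

lemma sum_Es: "(\<Sum>j\<in>Es. g j) = g (k-1) + g k + g (k+1) + g (3*k) + g (3*k+1) + g (3*k+2)"
  for g :: "nat \<Rightarrow> 'a::comm_monoid_add"
  unfolding Es_def using Es_distinct by (simp add: add.assoc)

lemma sum_TE: "(\<Sum>j\<in>T \<inter> Es. cr j) = dl k * (of_bool (k-1 \<in> T) + of_bool (3*k+2 \<in> T) - of_bool (k+1 \<in> T) - of_bool (3*k \<in> T))"
proof -
  have "(\<Sum>j\<in>T \<inter> Es. cr j) = (\<Sum>j\<in>Es. if j \<in> T then cr j else 0)"
    by (subst Int_commute) (rule sum.inter_restrict[OF fins(2)])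
  also have "\<dots> = dl k * (of_bool (k-1 \<in> T) + of_bool (3*k+2 \<in> T) - of_bool (k+1 \<in> T) - of_bool (3*k \<in> T))"
    unfolding sum_Es cr_E by (simp add: algebra_simps)
  finally show ?thesis .
qed

lemma card_TE: "card (T \<inter> Es) = of_bool (k-1 \<in> T) + of_bool (k \<in> T) + of_bool (k+1 \<in> T) + of_bool (3*k \<in> T) + of_bool (3*k+1 \<in> T) + of_bool (3*k+2 \<in> T)"
proof -
  have "card (T \<inter> Es) = (\<Sum>j\<in>T \<inter> Es. 1)" by simp
  also have "\<dots> = (\<Sum>j\<in>Es. if j \<in> T then 1 else 0)"
    by (subst Int_commute) (rule sum.inter_restrict[OF fins(2)])
  also have "\<dots> = of_bool (k-1 \<in> T) + of_bool (k \<in> T) + of_bool (k+1 \<in> T) + of_bool (3*k \<in> T) + of_bool (3*k+1 \<in> T) + of_bool (3*k+2 \<in> T)"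
    unfolding sum_Es by simp
  finally show ?thesis .
qed

lemma sum_Bs: "(\<Sum>j\<in>Bs. cr j) = gamma1 k - 2 * dl k"
proof -
  have "Pos k = Bs \<union> {k-1, 3*k+2}" unfolding Pos_def[OF k2] Bs_def using k2 by auto
  moreover have "Bs \<inter> {k-1, 3*k+2} = {}" unfolding Bs_def using k2 by auto
  ultimately have "(\<Sum>j\<in>Pos k. cr j) = (\<Sum>j\<in>Bs. cr j) + (\<Sum>j\<in>{k-1, 3*k+2}. cr j)"
    using fins(1) by (simp add: sum.union_disjoint)
  moreover have "(\<Sum>j\<in>Pos k. cr j) = gamma1 k"
    using arg_cong[OF sum_Pos[OF k2], of Re] by (simp add: Re_sum)
  moreover have "(\<Sum>j\<in>{k-1, 3*k+2}. cr j) = 2 * dl k" using k2 cr_E by simp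
  ultimately show ?thesis by simp
qed


lemma alt_forms:
  "T1 k = {0..k} \<union> {3*k+2..4*k+1}"
  "T1' k = {0..<k} \<union> {3*k+1..4*k+1}"
  "T2bp k = insert (k+1) ({0..<k} \<union> {3*k+2..4*k+1})"
  "T2ap k = insert (3*k+1) ({0..k} \<union> {3*k+3..4*k+1})"
  "T2bm k = insert (3*k) ({0..<k} \<union> {3*k+2..4*k+1})"
  "T2am k = insert k ({0..<k-1} \<union> {3*k+1..4*k+1})"
  unfolding T1_def[OF k2] T1'_alt[OF k2] T2bp_def[OF k2] T2ap_def[OF k2] T2bm_def[OF k2] T2am_def[OF k2]
  using k2 by auto

lemma T_eq:
  assumes T: "Bs \<subseteq> T" "T \<inter> NNs = {}" "T \<subseteq> {0..<2*al k}"
    and S: "Bs \<subseteq> S" "S \<inter> NNs = {}" "S \<subseteq> {0..<2*al k}"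
    and m: "(k-1 \<in> T) = (k-1 \<in> S)" "(k \<in> T) = (k \<in> S)" "(k+1 \<in> T) = (k+1 \<in> S)"
      "(3*k \<in> T) = (3*k \<in> S)" "(3*k+1 \<in> T) = (3*k+1 \<in> S)" "(3*k+2 \<in> T) = (3*k+2 \<in> S)"
  shows "T = S"
proof (rule Set.set_eqI)
  fix x
  show "x \<in> T \<longleftrightarrow> x \<in> S"
  proof (cases "x < 2 * al k")
    case False then show ?thesis using T(3) S(3) by auto
  next
    case True
    then have "x \<in> Bs \<union> Es \<union> NNs" by (subst univ_split[symmetric]) simp
    then consider "x \<in> Bs" | "x \<in> NNs" | "x = k-1" | "x = k" | "x = k+1" | "x = 3*k" | "x = 3*k+1" | "x = 3*k+2"
      unfolding Es_def by auto
    then show ?thesis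
    proof cases
      case 1 then show ?thesis using T(1) S(1) by blast
    next
      case 2 then show ?thesis using T(2) S(2) by blast
    next
      case 3 then show ?thesis using m(1) by simp
    next
      case 4 then show ?thesis using m(2) by simp
    next
      case 5 then show ?thesis using m(3) by simp
    next
      case 6 then show ?thesis using m(4) by simp
    next
      case 7 then show ?thesis using m(5) by simp
    next
      case 8 then show ?thesis using m(6) by simp
    qed
  qed
qed

lemma special_props:
  assumes "S \<in> {T1 k, T1' k, T2bp k, T2ap k, T2bm k, T2am k}"
  shows "Bs \<subseteq> S" "S \<inter> NNs = {}" "S \<subseteq> {0..<2*al k}"
  using assms k2 unfolding alt_forms Bs_def NNs_def by auto

lemma bound:
  assumes T: "T \<subseteq> {0..<2*al k}" "card T = al k"
    and ns: "T \<notin> {T1 k, T1' k, T2bp k, T2ap k, T2bm k, T2am k}"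
  shows "(\<Sum>j\<in>T. cr j) \<le> gamma3 k"
proof -
  have fT: "finite T" using T(1) finite_subset by blast
  have dec: "(\<Sum>j\<in>T. cr j) = (\<Sum>j\<in>T \<inter> Bs. cr j) + (\<Sum>j\<in>T \<inter> Es. cr j) + (\<Sum>j\<in>T \<inter> NNs. cr j)"
  proof -
    have "T = (T \<inter> Bs) \<union> (T \<inter> Es) \<union> (T \<inter> NNs)" using T(1) univ_split by auto
    then have "(\<Sum>j\<in>T. cr j) = (\<Sum>j\<in>(T \<inter> Bs) \<union> (T \<inter> Es) \<union> (T \<inter> NNs). cr j)" by simp
    also have "\<dots> = (\<Sum>j\<in>T \<inter> Bs. cr j) + (\<Sum>j\<in>T \<inter> Es. cr j) + (\<Sum>j\<in>T \<inter> NNs. cr j)"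
      using fT disj by (simp add: sum.union_disjoint Int_Un_distrib2 inf_assoc inf_left_commute[of _ T] inf_commute[of _ T])
    finally show ?thesis .
  qed
  have dl: "dl k > 0" "bt k \<le> 2 * dl k" using dl_pos[OF k2] bt_le[OF k2] by auto
  have bt: "bt k > 0" by (rule bt_pos[OF k2])
  define xE where "xE = (\<Sum>j\<in>T \<inter> Es. cr j)"
  have xE: "xE = dl k * (of_bool (k-1 \<in> T) + of_bool (3*k+2 \<in> T) - of_bool (k+1 \<in> T) - of_bool (3*k \<in> T))"
    unfolding xE_def by (rule sum_TE)
  have xE2: "xE \<le> 2 * dl k"
  proof -
    have "of_bool (k-1 \<in> T) + of_bool (3*k+2 \<in> T) - of_bool (k+1 \<in> T) - of_bool (3*k \<in> T) \<le> (2::real)"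
      by (simp add: of_bool_def)
    then show ?thesis unfolding xE using dl(1) by (simp add: mult_left_le)
  qed
  have NN0: "(\<Sum>j\<in>T \<inter> NNs. cr j) \<le> 0"
    by (rule sum_nonpos) (use cr_N bt in \<open>fastforce\<close>)
  have B0: "(\<Sum>j\<in>T \<inter> Bs. cr j) \<le> (\<Sum>j\<in>Bs. cr j)"
    by (rule sum_mono2[OF fins(1)]) (use cr_B bt in \<open>auto intro: order.trans[OF less_imp_le[OF bt]]\<close>)
  have g: "gamma3 k = gamma1 k - bt k" by (rule gamma3_alt[OF k2])
  show ?thesis
  proof (cases "Bs \<subseteq> T")
    case False
    then obtain j0 where j0: "j0 \<in> Bs" "j0 \<notin> T" by auto
    have "(\<Sum>j\<in>T \<inter> Bs. cr j) \<le> (\<Sum>j\<in>Bs - {j0}. cr j)"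
      by (rule sum_mono2) (use fins(1) j0 cr_B bt in \<open>auto intro: order.trans[OF less_imp_le[OF bt]]\<close>)
    also have "\<dots> = (\<Sum>j\<in>Bs. cr j) - cr j0" using fins(1) j0(1) by (simp add: sum_diff1)
    also have "\<dots> \<le> (\<Sum>j\<in>Bs. cr j) - bt k" using cr_B[OF j0(1)] by simp
    finally show ?thesis using dec NN0 xE2 sum_Bs g unfolding xE_def by linarith
  next
    case Bsub: True
    show ?thesis
    proof (cases "T \<inter> NNs = {}")
      case False
      then obtain j0 where j0: "j0 \<in> T \<inter> NNs" by auto
      have "(\<Sum>j\<in>T \<inter> NNs. cr j) = cr j0 + (\<Sum>j\<in>T \<inter> NNs - {j0}. cr j)"
        using fins(3) j0 by (simp add: sum.remove)
      also have "\<dots> \<le> - bt k + 0"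
        using j0 cr_N bt by (intro add_mono sum_nonpos) (auto, fastforce)
      finally have "(\<Sum>j\<in>T \<inter> NNs. cr j) \<le> - bt k" by simp
      then show ?thesis using dec xE2 B0 sum_Bs g unfolding xE_def by linarith
    next
      case NNe: True
      have TB: "T \<inter> Bs = Bs" using Bsub by auto
      have "T = Bs \<union> (T \<inter> Es)" using T(1) univ_split Bsub NNe by auto
      then have "card T = card Bs + card (T \<inter> Es)"
        using fins disj by (metis card_Un_disjoint finite_Int inf_commute inf_left_commute inf_bot_right)
      then have c3: "card (T \<inter> Es) = 3" using T(2) card_Bs k2 by simp
      note c6 = six_cases[OF c3[unfolded card_TE]]
      have sp: "T \<noteq> S" if "S \<in> {T1 k, T1' k, T2bp k, T2ap k, T2bm k, T2am k}" for S
        using ns that by auto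
      have mem: "S \<in> {T1 k, T1' k, T2bp k, T2ap k, T2bm k, T2am k} \<Longrightarrow>
          (k-1 \<in> T) = (k-1 \<in> S) \<Longrightarrow> (k \<in> T) = (k \<in> S) \<Longrightarrow> (k+1 \<in> T) = (k+1 \<in> S) \<Longrightarrow>
          (3*k \<in> T) = (3*k \<in> S) \<Longrightarrow> (3*k+1 \<in> T) = (3*k+1 \<in> S) \<Longrightarrow> (3*k+2 \<in> T) = (3*k+2 \<in> S) \<Longrightarrow> False" for S
      proof -
        assume s: "S \<in> {T1 k, T1' k, T2bp k, T2ap k, T2bm k, T2am k}"
          and m: "(k-1 \<in> T) = (k-1 \<in> S)" "(k \<in> T) = (k \<in> S)" "(k+1 \<in> T) = (k+1 \<in> S)"
            "(3*k \<in> T) = (3*k \<in> S)" "(3*k+1 \<in> T) = (3*k+1 \<in> S)" "(3*k+2 \<in> T) = (3*k+2 \<in> S)"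
        have "T = S" by (rule T_eq[OF Bsub NNe T(1) special_props(1)[OF s] special_props(2)[OF s] special_props(3)[OF s] m])
        then show False using sp[OF s] by simp
      qed
      have "of_bool (k-1 \<in> T) + of_bool (3*k+2 \<in> T) \<le> (of_bool (k+1 \<in> T) + of_bool (3*k \<in> T) :: nat)"
      proof -
        have "False" if "\<not> ?thesis"
        proof -
          from c6 show False
          proof (elim disjE)
            assume "of_bool (k-1 \<in> T) + of_bool (3*k+2 \<in> T) \<le> (of_bool (k+1 \<in> T) + of_bool (3*k \<in> T) :: nat)"
            then show False using that by simp
          next
            assume h: "(k-1 \<in> T) \<and> (k \<in> T) \<and> (k+1 \<notin> T) \<and> (3*k \<notin> T) \<and> (3*k+1 \<notin> T) \<and> (3*k+2 \<in> T)"
            show False by (rule mem[of "T1 k"]) (use h k2 in \<open>simp_all add: alt_forms\<close>)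
          next
            assume h: "(k-1 \<in> T) \<and> (k \<notin> T) \<and> (k+1 \<notin> T) \<and> (3*k \<notin> T) \<and> (3*k+1 \<in> T) \<and> (3*k+2 \<in> T)"
            show False by (rule mem[of "T1' k"]) (use h k2 in \<open>simp_all add: alt_forms\<close>)
          next
            assume h: "(k-1 \<in> T) \<and> (k \<notin> T) \<and> (k+1 \<in> T) \<and> (3*k \<notin> T) \<and> (3*k+1 \<notin> T) \<and> (3*k+2 \<in> T)"
            show False by (rule mem[of "T2bp k"]) (use h k2 in \<open>simp_all add: alt_forms\<close>)
          next
            assume h: "(k-1 \<in> T) \<and> (k \<notin> T) \<and> (k+1 \<notin> T) \<and> (3*k \<in> T) \<and> (3*k+1 \<notin> T) \<and> (3*k+2 \<in> T)"
            show False by (rule mem[of "T2bm k"]) (use h k2 in \<open>simp_all add: alt_forms\<close>)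
          next
            assume h: "(k-1 \<in> T) \<and> (k \<in> T) \<and> (k+1 \<notin> T) \<and> (3*k \<notin> T) \<and> (3*k+1 \<in> T) \<and> (3*k+2 \<notin> T)"
            show False by (rule mem[of "T2ap k"]) (use h k2 in \<open>simp_all add: alt_forms\<close>)
          next
            assume h: "(k-1 \<notin> T) \<and> (k \<in> T) \<and> (k+1 \<notin> T) \<and> (3*k \<notin> T) \<and> (3*k+1 \<in> T) \<and> (3*k+2 \<in> T)"
            show False by (rule mem[of "T2am k"]) (use h k2 in \<open>auto simp: alt_forms\<close>)
          qed
        qed
        then show ?thesis by blast
      qed
      then have "of_bool (k-1 \<in> T) + of_bool (3*k+2 \<in> T) - of_bool (k+1 \<in> T) - of_bool (3*k \<in> T) \<le> (0::real)"
        by (simp add: of_bool_def split: if_splits)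
      then have "xE \<le> 0" unfolding xE using dl(1) by (simp add: mult_le_0_iff)
      then show ?thesis using dec NN0 TB sum_Bs g dl(2) unfolding xE_def by simp
    qed
  qed
qed

end


lemma exp_Cplx: "exp (of_real \<mu> * Complex a b) = of_real (exp (a*\<mu>)) * cis (b*\<mu>)"
  by (simp add: exp_eq_polar mult.commute)

lemma cis_diff_sin: "cis x - cis (- x) = 2 * \<i> * of_real (sin x)"
  by (simp add: complex_eq_iff)

lemma pair_exp: "D * exp (of_real \<mu> * Complex a b) - D * exp (of_real \<mu> * Complex a (-b))
   = (2 * \<i> * D) * of_real (exp (a*\<mu>) * sin (b*\<mu>))"
proof -
  have "D * exp (of_real \<mu> * Complex a b) - D * exp (of_real \<mu> * Complex a (-b))
     = D * of_real (exp (a*\<mu>)) * (cis (b*\<mu>) - cis (- (b*\<mu>)))"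
    unfolding exp_Cplx by (simp add: algebra_simps)
  also have "\<dots> = (2 * \<i> * D) * of_real (exp (a*\<mu>) * sin (b*\<mu>))"
    unfolding cis_diff_sin by (simp add: algebra_simps)
  finally show ?thesis .
qed

context
  fixes k :: nat
  assumes k2: "k \<ge> 2"
begin

definition "sgn6 T = (k-1 \<in> T, k \<in> T, k+1 \<in> T, 3*k \<in> T, 3*k+1 \<in> T, 3*k+2 \<in> T)"

lemma sgns:
  "sgn6 (T1 k) = (True, True, False, False, False, True)"
  "sgn6 (T1' k) = (True, False, False, False, True, True)"
  "sgn6 (T2bp k) = (True, False, True, False, False, True)"
  "sgn6 (T2ap k) = (True, True, False, False, True, False)"
  "sgn6 (T2bm k) = (True, False, False, True, False, True)"
  "sgn6 (T2am k) = (False, True, False, False, True, True)"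
  unfolding sgn6_def alt_forms[OF k2] using k2 by auto

lemma distinct6:
  "T1 k \<noteq> T1' k" "T1 k \<noteq> T2bp k" "T1 k \<noteq> T2ap k" "T1 k \<noteq> T2bm k" "T1 k \<noteq> T2am k"
  "T1' k \<noteq> T2bp k" "T1' k \<noteq> T2ap k" "T1' k \<noteq> T2bm k" "T1' k \<noteq> T2am k"
  "T2bp k \<noteq> T2ap k" "T2bp k \<noteq> T2bm k" "T2bp k \<noteq> T2am k"
  "T2ap k \<noteq> T2bm k" "T2ap k \<noteq> T2am k" "T2bm k \<noteq> T2am k"
  by (metis sgns prod.inject)+

lemma spec_in_TS: "S \<in> {T1 k, T1' k, T2bp k, T2ap k, T2bm k, T2am k} \<Longrightarrow> S \<subseteq> {0..<2*al k} \<and> card S = al k"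
proof -
  assume S: "S \<in> {T1 k, T1' k, T2bp k, T2ap k, T2bm k, T2am k}"
  have f1: "finite (T1 k)" "finite (T1' k)" by (rule fin_T1[OF k2], rule fin_T1'[OF k2])
  have sub: "S \<subseteq> {0..<2*al k}" using special_props(3)[OF k2 S] .
  have c: "card (T1 k) = al k" "card (T1' k) = al k" by (rule T1_card[OF k2], rule T1'_card[OF k2])
  have "card S = al k"
    using S
  proof (elim insertE emptyE)
    assume "S = T1 k" then show ?thesis using c by simp
  next
    assume "S = T1' k" then show ?thesis using c by simp
  next
    assume "S = T2bp k"
    moreover have "card (T2bp k) = al k" unfolding T2bp_def[OF k2] using c f1 by (subst card_swap) (auto simp: alt_forms[OF k2])
    ultimately show ?thesis by simp
  next
    assume "S = T2ap k"
    moreover have "card (T2ap k) = al k" unfolding T2ap_def[OF k2] using c f1 k2 by (subst card_swap) (auto simp: alt_forms[OF k2])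
    ultimately show ?thesis by simp
  next
    assume "S = T2bm k"
    moreover have "card (T2bm k) = al k" unfolding T2bm_def[OF k2] using c f1 k2 by (subst card_swap) (auto simp: alt_forms[OF k2])
    ultimately show ?thesis by simp
  next
    assume "S = T2am k"
    moreover have "card (T2am k) = al k" unfolding T2am_def[OF k2] using c f1 k2 by (subst card_swap) (auto simp: alt_forms[OF k2])
    ultimately show ?thesis by simp
  qed
  then show ?thesis using sub by simp
qed


lemma main:
  "\<exists>K1 K2 :: complex. K1 \<noteq> 0 \<and> K2 \<noteq> 0 \<and>
     - K2 / K1 = of_real (2 / (sin (pi / (2 * real (al k))))\<^sup>2) \<and>
     (\<lambda>\<mu>. det (A_mat (al k) \<mu>)
            - K1 * of_real (exp (gamma1 k * \<mu>) * sin \<mu>)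
            - K2 * of_real (exp (gamma2 k * \<mu>) * sin (ss (al k) (2 * k - 1) * \<mu>)))
       \<in> bigo at_top (\<lambda>\<mu>. of_real (exp (gamma3 k * \<mu>)))"
proof -
  define Spec where "Spec = {T1 k, T1' k, T2bp k, T2ap k, T2bm k, T2am k}"
  define TS where "TS = {T. T \<subseteq> {0..<2*al k} \<and> card T = al k}"
  define D1 where "D1 = DD k (T1 k)"
  define s where "s = sig1 k"
  define g where "g T \<mu> = DD k T * exp (of_real \<mu> * (\<Sum>j\<in>T. zz (al k) j))" for T \<mu>
  define K1 where "K1 = 2 * \<i> * D1"
  define D2 where "D2 = - D1 / of_real (s^2)"
  define K2 where "K2 = 2 * (2 * \<i> * D2)"
  have D1nz: "D1 \<noteq> 0" unfolding D1_def DD_def[OF k2]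
    by (rule McW_nonzero[OF inj_al[OF k2] T1_sub[OF k2] T1_card[OF k2]])
  have spos: "s > 0" unfolding s_def by (rule sig1_pos[OF k2])
  have s2: "(of_real (s^2) :: complex) \<noteq> 0" using spos by simp
  have dT1': "DD k (T1' k) = - D1" unfolding D1_def by (rule DD_T1'[OF k2])
  have dT2bp: "DD k (T2bp k) = D2" unfolding D2_def D1_def s_def using DD_T2bp[OF k2] s2[unfolded s_def]
    by (simp add: field_simps)
  have dT2ap: "DD k (T2ap k) = D2" unfolding D2_def D1_def s_def using DD_T2ap[OF k2] s2[unfolded s_def]
    by (simp add: field_simps)
  have dT2bm: "DD k (T2bm k) = - D2" unfolding D2_def D1_def s_def using DD_T2bm[OF k2] DD_T1'[OF k2] s2[unfolded s_def]
    by (simp add: field_simps)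
  have dT2am: "DD k (T2am k) = - D2" unfolding D2_def D1_def s_def using DD_T2am[OF k2] DD_T1'[OF k2] s2[unfolded s_def]
    by (simp add: field_simps)
  have K1nz: "K1 \<noteq> 0" unfolding K1_def using D1nz by simp
  have D2nz: "D2 \<noteq> 0" unfolding D2_def using D1nz s2 by simp
  have K2nz: "K2 \<noteq> 0" unfolding K2_def using D2nz by simp
  have ratio: "- K2 / K1 = of_real (2 / (sin (pi / (2 * real (al k))))\<^sup>2)"
  proof -
    have "- K2 / K1 = 2 / of_real (s^2)" unfolding K2_def K1_def D2_def using D1nz s2
      by (simp add: field_simps)
    then show ?thesis unfolding s_def sig1_def[OF k2] by simp
  qed
  have SpecTS: "Spec \<subseteq> TS" unfolding TS_def Spec_def using spec_in_TS by blast
  have finTS: "finite TS" unfolding TS_def by (rule finite_subset[of _ "Pow {0..<2*al k}"]) auto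
  have split: "(\<Sum>T\<in>TS. g T \<mu>) = (\<Sum>T\<in>TS - Spec. g T \<mu>) + (\<Sum>T\<in>Spec. g T \<mu>)" for \<mu>
    by (rule sum.subset_diff[OF SpecTS finTS])
  have spec_sum: "(\<Sum>T\<in>Spec. g T \<mu>) = K1 * of_real (exp (gamma1 k * \<mu>) * sin \<mu>)
      + K2 * of_real (exp (gamma2 k * \<mu>) * sin (ss (al k) (2 * k - 1) * \<mu>))" for \<mu>
  proof -
    have "(\<Sum>T\<in>Spec. g T \<mu>) = g (T1 k) \<mu> + g (T1' k) \<mu> + g (T2bp k) \<mu> + g (T2ap k) \<mu> + g (T2bm k) \<mu> + g (T2am k) \<mu>"
      unfolding Spec_def using distinct6 by (simp add: add.assoc)
    also have "\<dots> = (D1 * exp (of_real \<mu> * Complex (gamma1 k) 1) - D1 * exp (of_real \<mu> * Complex (gamma1 k) (-1)))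
       + (D2 * exp (of_real \<mu> * Complex (gamma2 k) (sv k)) - D2 * exp (of_real \<mu> * Complex (gamma2 k) (- sv k)))
       + (D2 * exp (of_real \<mu> * Complex (gamma2 k) (sv k)) - D2 * exp (of_real \<mu> * Complex (gamma2 k) (- sv k)))"
      unfolding g_def sum_T1[OF k2] sum_T1'[OF k2] sum_T2bp[OF k2] sum_T2ap[OF k2] sum_T2bm[OF k2] sum_T2am[OF k2]
        dT1' dT2bp dT2ap dT2bm dT2am D1_def[symmetric] by (simp add: algebra_simps)
    also have "\<dots> = K1 * of_real (exp (gamma1 k * \<mu>) * sin \<mu>)
      + K2 * of_real (exp (gamma2 k * \<mu>) * sin (ss (al k) (2 * k - 1) * \<mu>))"
      unfolding pair_exp K1_def K2_def sv_def[OF k2] by (simp add: algebra_simps)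
    finally show ?thesis .
  qed
  have rest: "det (A_mat (al k) \<mu>) - K1 * of_real (exp (gamma1 k * \<mu>) * sin \<mu>)
            - K2 * of_real (exp (gamma2 k * \<mu>) * sin (ss (al k) (2 * k - 1) * \<mu>)) = (\<Sum>T\<in>TS - Spec. g T \<mu>)" for \<mu>
  proof -
    have "det (A_mat (al k) \<mu>) = (\<Sum>T\<in>TS. g T \<mu>)" unfolding det_expansion TS_def g_def DD_def[OF k2] ..
    then show ?thesis unfolding split spec_sum by simp
  qed
  define C where "C = (\<Sum>T\<in>TS - Spec. norm (DD k T))"
  have bnd: "norm (\<Sum>T\<in>TS - Spec. g T \<mu>) \<le> C * norm (of_real (exp (gamma3 k * \<mu>)) :: complex)" if mu: "\<mu> \<ge> 0" for \<mu>
  proof -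
    have "norm (\<Sum>T\<in>TS - Spec. g T \<mu>) \<le> (\<Sum>T\<in>TS - Spec. norm (g T \<mu>))" by (rule norm_sum)
    also have "\<dots> \<le> (\<Sum>T\<in>TS - Spec. norm (DD k T) * exp (gamma3 k * \<mu>))"
    proof (rule sum_mono)
      fix T assume T: "T \<in> TS - Spec"
      then have T': "T \<subseteq> {0..<2*al k}" "card T = al k" "T \<notin> {T1 k, T1' k, T2bp k, T2ap k, T2bm k, T2am k}"
        unfolding TS_def Spec_def by auto
      have re: "Re (\<Sum>j\<in>T. zz (al k) j) \<le> gamma3 k"
        unfolding Re_sum by (rule bound[OF k2 T'])
      have "norm (g T \<mu>) = norm (DD k T) * exp (\<mu> * Re (\<Sum>j\<in>T. zz (al k) j))"
        unfolding g_def norm_mult norm_exp_eq_Re by simp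
      also have "\<dots> \<le> norm (DD k T) * exp (gamma3 k * \<mu>)"
        using re mu by (intro mult_left_mono) (auto simp: mult.commute mult_left_mono)
      finally show "norm (g T \<mu>) \<le> norm (DD k T) * exp (gamma3 k * \<mu>)" .
    qed
    also have "\<dots> = C * norm (of_real (exp (gamma3 k * \<mu>)) :: complex)"
      unfolding C_def sum_distrib_right by simp
    finally show ?thesis .
  qed
  have "(\<lambda>\<mu>. det (A_mat (al k) \<mu>) - K1 * of_real (exp (gamma1 k * \<mu>) * sin \<mu>)
            - K2 * of_real (exp (gamma2 k * \<mu>) * sin (ss (al k) (2 * k - 1) * \<mu>)))
       \<in> bigo at_top (\<lambda>\<mu>. of_real (exp (gamma3 k * \<mu>)))"
    unfolding rest
    by (rule bigoI[where c=C]) (use bnd in \<open>auto intro: eventually_mono[OF eventually_ge_at_top[of 0]]\<close>)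
  then show ?thesis using K1nz K2nz ratio by blast
qed

end


theorem theorem2p3:
  fixes k :: nat
  assumes "k \<ge> 2"
  defines "\<alpha> \<equiv> 2 * k + 1"
  shows "\<exists>K1 K2 :: complex. K1 \<noteq> 0 \<and> K2 \<noteq> 0 \<and>
     - K2 / K1 = of_real (2 / (sin (pi / (2 * real \<alpha>)))\<^sup>2) \<and>
     (\<lambda>\<mu>. det (A_mat \<alpha> \<mu>)
            - K1 * of_real (exp (gamma1 k * \<mu>) * sin \<mu>)
            - K2 * of_real (exp (gamma2 k * \<mu>) * sin (ss \<alpha> (2 * k - 1) * \<mu>)))
       \<in> bigo at_top (\<lambda>\<mu>. of_real (exp (gamma3 k * \<mu>)))"
  unfolding \<alpha>_def by (rule main[OF assms(1)])

end
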